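(* Let $(\mathcal B,<)$ be a monoidal poset and $B_0$ a maximal element of it. Then for every $B\in\mathcal B$ there exist $s\ge0$ and nodes $i_1,\dots,i_s$ such that $B_0>r_{i_s}B_0>r_{i_{s-1}}r_{i_s}B_0>\cdots>r_{i_1}r_{i_2}\cdots r_{i_s}B_0=B$.
   Context: Setting: $M$ is a spherical simply laced Coxeter diagram with nodes $1,\dots,n$ ($i\sim j$: distinct adjacent nodes; $i\not\sim j$ otherwise); $W$ its Weyl group with positive roots $\Phi^+$, fundamental roots $\alpha_i$, reflections $r_i$, inner product with $(\alpha_i,\alpha_i)=2$, $(\alpha_i,\alpha_j)=-1$ if $i\sim j$, $0$ otherwise; height $\mathrm{ht}(\sum a_k\alpha_k)=\sum a_k$. For a set $B$ of mutually orthogonal positive roots, $wB=\Phi^+\cap\{\pm w\beta:\beta\in B\}$. A $W$-orbit $\mathcal B$ of such sets is admissible if for every $B\in\mathcal B$, all nodes $i\not\sim j$ and root $\gamma$ with $\gamma,\gamma-\alpha_i+\alpha_j\in B$, $r_iB=r_jB$. For $B,C\in\mathcal B$ write $B\prec C$ if $B\ne C$ and the minimal height of an element of $B\setminus C$ is strictly smaller than the minimal height of an element of $C\setminus B$. For admissible $\mathcal B$, the monoidal poset $(\mathcal B,<)$ is $\mathcal B$ with the partial order $<$ given by the transitive closure of $\{(B,r_jB): B\in\mathcal B,\ j\text{ a node},\ B\prec r_jB\}$; $>$ is the reverse relation. *)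

theory Defs
  imports Main
begin

text \<open>Elements of the root lattice are coefficient vectors nat \<Rightarrow> int
(coordinates outside 1..n are 0 for all roots).\<close>

definition simply_laced_diagram :: "nat \<Rightarrow> (nat \<Rightarrow> nat \<Rightarrow> bool) \<Rightarrow> bool" where
  "simply_laced_diagram n adj \<longleftrightarrow>
     (\<forall>i j. adj i j \<longrightarrow> i \<in> {1..n} \<and> j \<in> {1..n} \<and> i \<noteq> j \<and> adj j i)"

definition cartan :: "(nat \<Rightarrow> nat \<Rightarrow> bool) \<Rightarrow> nat \<Rightarrow> nat \<Rightarrow> int" where
  "cartan adj i j = (if i = j then 2 else if adj i j then -1 else 0)"

definition ip :: "nat \<Rightarrow> (nat \<Rightarrow> nat \<Rightarrow> bool) \<Rightarrow> (nat \<Rightarrow> int) \<Rightarrow> (nat \<Rightarrow> int) \<Rightarrow> int" where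
  "ip n adj v w = (\<Sum>i\<in>{1..n}. \<Sum>j\<in>{1..n}. v i * cartan adj i j * w j)"

definition alpha :: "nat \<Rightarrow> nat \<Rightarrow> int" where
  "alpha i = (\<lambda>k. if k = i then 1 else 0)"

definition refl :: "nat \<Rightarrow> (nat \<Rightarrow> nat \<Rightarrow> bool) \<Rightarrow> nat \<Rightarrow> (nat \<Rightarrow> int) \<Rightarrow> (nat \<Rightarrow> int)" where
  "refl n adj i v = (\<lambda>k. v k - ip n adj v (alpha i) * alpha i k)"

inductive_set weyl :: "nat \<Rightarrow> (nat \<Rightarrow> nat \<Rightarrow> bool) \<Rightarrow> ((nat \<Rightarrow> int) \<Rightarrow> (nat \<Rightarrow> int)) set"
  for n adj where
  weyl_id: "id \<in> weyl n adj"
| weyl_step: "w \<in> weyl n adj \<Longrightarrow> i \<in> {1..n} \<Longrightarrow> refl n adj i \<circ> w \<in> weyl n adj"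

definition spherical :: "nat \<Rightarrow> (nat \<Rightarrow> nat \<Rightarrow> bool) \<Rightarrow> bool" where
  "spherical n adj \<longleftrightarrow> finite (weyl n adj)"

definition roots :: "nat \<Rightarrow> (nat \<Rightarrow> nat \<Rightarrow> bool) \<Rightarrow> (nat \<Rightarrow> int) set" where
  "roots n adj = {w (alpha i) | w i. w \<in> weyl n adj \<and> i \<in> {1..n}}"

definition pos_roots :: "nat \<Rightarrow> (nat \<Rightarrow> nat \<Rightarrow> bool) \<Rightarrow> (nat \<Rightarrow> int) set" where
  "pos_roots n adj = {\<gamma> \<in> roots n adj. \<forall>k. 0 \<le> \<gamma> k}"

definition ht :: "nat \<Rightarrow> (nat \<Rightarrow> int) \<Rightarrow> int" where
  "ht n \<gamma> = (\<Sum>k\<in>{1..n}. \<gamma> k)"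

definition orth_pos_set :: "nat \<Rightarrow> (nat \<Rightarrow> nat \<Rightarrow> bool) \<Rightarrow> (nat \<Rightarrow> int) set \<Rightarrow> bool" where
  "orth_pos_set n adj B \<longleftrightarrow> B \<subseteq> pos_roots n adj \<and>
     (\<forall>\<beta>\<in>B. \<forall>\<beta>'\<in>B. \<beta> \<noteq> \<beta>' \<longrightarrow> ip n adj \<beta> \<beta>' = 0)"

definition act :: "nat \<Rightarrow> (nat \<Rightarrow> nat \<Rightarrow> bool) \<Rightarrow> ((nat \<Rightarrow> int) \<Rightarrow> (nat \<Rightarrow> int))
                    \<Rightarrow> (nat \<Rightarrow> int) set \<Rightarrow> (nat \<Rightarrow> int) set" where
  "act n adj w B = {\<gamma> \<in> pos_roots n adj. \<exists>\<beta>\<in>B. \<gamma> = w \<beta> \<or> \<gamma> = - w \<beta>}"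

definition is_orbit :: "nat \<Rightarrow> (nat \<Rightarrow> nat \<Rightarrow> bool) \<Rightarrow> (nat \<Rightarrow> int) set set \<Rightarrow> bool" where
  "is_orbit n adj \<B> \<longleftrightarrow>
     (\<exists>B1. orth_pos_set n adj B1 \<and> \<B> = {act n adj w B1 | w. w \<in> weyl n adj})"

definition admissible :: "nat \<Rightarrow> (nat \<Rightarrow> nat \<Rightarrow> bool) \<Rightarrow> (nat \<Rightarrow> int) set set \<Rightarrow> bool" where
  "admissible n adj \<B> \<longleftrightarrow> is_orbit n adj \<B> \<and>
     (\<forall>B\<in>\<B>. \<forall>i\<in>{1..n}. \<forall>j\<in>{1..n}. \<not> adj i j \<longrightarrow>
        (\<forall>\<gamma>. \<gamma> \<in> B \<and> (\<lambda>k. \<gamma> k - alpha i k + alpha j k) \<in> B \<longrightarrow>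
             act n adj (refl n adj i) B = act n adj (refl n adj j) B))"

definition prec :: "nat \<Rightarrow> (nat \<Rightarrow> int) set \<Rightarrow> (nat \<Rightarrow> int) set \<Rightarrow> bool" where
  "prec n B C \<longleftrightarrow> B \<noteq> C \<and> Min (ht n ` (B - C)) < Min (ht n ` (C - B))"

definition mstep :: "nat \<Rightarrow> (nat \<Rightarrow> nat \<Rightarrow> bool) \<Rightarrow> (nat \<Rightarrow> int) set set
                      \<Rightarrow> (nat \<Rightarrow> int) set \<Rightarrow> (nat \<Rightarrow> int) set \<Rightarrow> bool" where
  "mstep n adj \<B> B C \<longleftrightarrow> B \<in> \<B> \<and>
     (\<exists>j\<in>{1..n}. C = act n adj (refl n adj j) B \<and> prec n B C)"

definition mless :: "nat \<Rightarrow> (nat \<Rightarrow> nat \<Rightarrow> bool) \<Rightarrow> (nat \<Rightarrow> int) set set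
                      \<Rightarrow> (nat \<Rightarrow> int) set \<Rightarrow> (nat \<Rightarrow> int) set \<Rightarrow> bool" where
  "mless n adj \<B> = (mstep n adj \<B>)\<^sup>+\<^sup>+"

text \<open>chain is k = r_{i_{k+1}} ... r_{i_s} B0 for is = [i_1,...,i_s].\<close>
definition chain :: "nat \<Rightarrow> (nat \<Rightarrow> nat \<Rightarrow> bool) \<Rightarrow> nat list \<Rightarrow> (nat \<Rightarrow> int) set
                      \<Rightarrow> nat \<Rightarrow> (nat \<Rightarrow> int) set" where
  "chain n adj is B0 k = foldr (\<lambda>i C. act n adj (refl n adj i) C) (drop k is) B0"

end

theory Submission
  imports Defs Complex_Main
begin

lemma cartan_sym:
  assumes "simply_laced_diagram n adj"
  shows "cartan adj i j = cartan adj j i"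
  using assms unfolding simply_laced_diagram_def cartan_def by auto

lemma ip_sym:
  assumes "simply_laced_diagram n adj"
  shows "ip n adj v w = ip n adj w v"
proof -
  have "ip n adj v w = (\<Sum>j\<in>{1..n}. \<Sum>i\<in>{1..n}. v i * cartan adj i j * w j)"
    unfolding ip_def by (rule sum.swap)
  also have "\<dots> = ip n adj w v"
    unfolding ip_def by (intro sum.cong refl) (simp add: cartan_sym[OF assms, of _ ] mult.commute mult.left_commute)
  finally show ?thesis .
qed

lemma ip_add1: "ip n adj (\<lambda>k. u k + v k) w = ip n adj u w + ip n adj v w"
  unfolding ip_def by (simp add: algebra_simps sum.distrib)
lemma ip_add2: "ip n adj w (\<lambda>k. u k + v k) = ip n adj w u + ip n adj w v"
  unfolding ip_def by (simp add: algebra_simps sum.distrib)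
lemma ip_smul1: "ip n adj (\<lambda>k. c * u k) w = c * ip n adj u w"
  unfolding ip_def by (simp add: algebra_simps sum_distrib_left)
lemma ip_smul2: "ip n adj w (\<lambda>k. c * u k) = c * ip n adj w u"
  unfolding ip_def by (simp add: algebra_simps sum_distrib_left)
lemma ip_diff1: "ip n adj (\<lambda>k. u k - v k) w = ip n adj u w - ip n adj v w"
  unfolding ip_def by (simp add: algebra_simps sum_subtractf)
lemma ip_diff2: "ip n adj w (\<lambda>k. u k - v k) = ip n adj w u - ip n adj w v"
  unfolding ip_def by (simp add: algebra_simps sum_subtractf)
lemma ip_neg1: "ip n adj (\<lambda>k. - u k) w = - ip n adj u w"
  unfolding ip_def by (simp add: sum_negf)
lemma ip_neg2: "ip n adj w (\<lambda>k. - u k) = - ip n adj w u"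
  unfolding ip_def by (simp add: sum_negf)

lemma ip_alpha2:
  assumes "j \<in> {1..n}"
  shows "ip n adj v (alpha j) = (\<Sum>i\<in>{1..n}. v i * cartan adj i j)"
proof -
  have "ip n adj v (alpha j) = (\<Sum>i\<in>{1..n}. \<Sum>k\<in>{1..n}. if k = j then v i * cartan adj i k else 0)"
    unfolding ip_def alpha_def by (intro sum.cong refl) auto
  also have "\<dots> = (\<Sum>i\<in>{1..n}. v i * cartan adj i j)"
    using assms by (simp add: sum.delta')
  finally show ?thesis .
qed

lemma ip_alpha_alpha:
  assumes "i \<in> {1..n}" "j \<in> {1..n}"
  shows "ip n adj (alpha i) (alpha j) = cartan adj i j"
proof -
  have "ip n adj (alpha i) (alpha j) = (\<Sum>k\<in>{1..n}. alpha i k * cartan adj k j)"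
    by (rule ip_alpha2[OF assms(2)])
  also have "\<dots> = (\<Sum>k\<in>{1..n}. if k = i then cartan adj k j else 0)"
    by (intro sum.cong refl) (simp add: alpha_def)
  also have "\<dots> = cartan adj i j" using assms(1) by (simp add: sum.delta')
  finally show ?thesis .
qed

lemma ip_alpha_self: "i \<in> {1..n} \<Longrightarrow> ip n adj (alpha i) (alpha i) = 2"
  by (simp add: ip_alpha_alpha cartan_def)

lemma refl_eq: "refl n adj i v = (\<lambda>k. v k - ip n adj v (alpha i) * alpha i k)"
  by (simp add: refl_def)

lemma ip_refl_alpha:
  assumes "i \<in> {1..n}"
  shows "ip n adj (refl n adj i v) (alpha i) = - ip n adj v (alpha i)"
  unfolding refl_def using assms
  by (simp add: ip_diff1 ip_smul1 ip_alpha_self)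

lemma refl_refl:
  assumes "i \<in> {1..n}"
  shows "refl n adj i (refl n adj i v) = v"
  using ip_refl_alpha[OF assms, where v=v] by (simp add: refl_def algebra_simps)

lemma refl_comp_self: "i \<in> {1..n} \<Longrightarrow> refl n adj i \<circ> refl n adj i = id"
  by (rule ext) (simp add: refl_refl)

lemma ip_lin1: "ip n adj (\<lambda>k. u k - c * a k) w = ip n adj u w - c * ip n adj a w"
  unfolding ip_def by (simp add: algebra_simps sum_subtractf sum_distrib_left)
lemma ip_lin2: "ip n adj w (\<lambda>k. u k - c * a k) = ip n adj w u - c * ip n adj w a"
  unfolding ip_def by (simp add: algebra_simps sum_subtractf sum_distrib_left)

lemma ip_refl:
  assumes "simply_laced_diagram n adj" "i \<in> {1..n}"
  shows "ip n adj (refl n adj i v) (refl n adj i w) = ip n adj v w"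
proof -
  have s: "ip n adj (alpha i) w = ip n adj w (alpha i)" by (rule ip_sym[OF assms(1)])
  show ?thesis unfolding refl_def
    by (simp only: ip_lin1 ip_lin2 ip_alpha_self[OF assms(2)] s) (simp add: algebra_simps)
qed

lemma refl_add: "refl n adj i (\<lambda>k. u k + v k) = (\<lambda>k. refl n adj i u k + refl n adj i v k)"
  unfolding refl_def by (rule ext) (simp add: ip_add1 algebra_simps)
lemma refl_neg: "refl n adj i (\<lambda>k. - u k) = (\<lambda>k. - refl n adj i u k)"
  unfolding refl_def by (rule ext) (simp add: ip_neg1 algebra_simps)
lemma refl_smul: "refl n adj i (\<lambda>k. c * u k) = (\<lambda>k. c * refl n adj i u k)"
  unfolding refl_def by (rule ext) (simp add: ip_smul1 algebra_simps)
lemma refl_diff: "refl n adj i (\<lambda>k. u k - v k) = (\<lambda>k. refl n adj i u k - refl n adj i v k)"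
  unfolding refl_def by (rule ext) (simp add: ip_diff1 algebra_simps)

definition lin :: "((nat \<Rightarrow> int) \<Rightarrow> (nat \<Rightarrow> int)) \<Rightarrow> bool" where
  "lin g \<longleftrightarrow> (\<forall>u v. g (\<lambda>k. u k + v k) = (\<lambda>k. g u k + g v k)) \<and> (\<forall>c u. g (\<lambda>k. c * u k) = (\<lambda>k. c * g u k))"

lemma lin_neg: "lin g \<Longrightarrow> g (\<lambda>k. - u k) = (\<lambda>k. - g u k)"
proof -
  assume "lin g"
  then have "\<forall>c u. g (\<lambda>k. c * u k) = (\<lambda>k. c * g u k)" unfolding lin_def by blast
  from this[rule_format, of "-1" u] show ?thesis by simp
qed
lemma lin_diff: "lin g \<Longrightarrow> g (\<lambda>k. u k - v k) = (\<lambda>k. g u k - g v k)"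
proof -
  assume l: "lin g"
  have a: "\<forall>u v. g (\<lambda>k. u k + v k) = (\<lambda>k. g u k + g v k)" using l unfolding lin_def by blast
  have "g (\<lambda>k. u k - v k) = g (\<lambda>k. u k + (\<lambda>k. - v k) k)" by simp
  also have "\<dots> = (\<lambda>k. g u k + g (\<lambda>k. - v k) k)" using a[rule_format, of u "\<lambda>k. - v k"] by simp
  finally show ?thesis using lin_neg[OF l] by simp
qed

lemma lin_refl: "lin (refl n adj i)"
  unfolding lin_def by (simp add: refl_add refl_smul)

lemma weyl_lin: "w \<in> weyl n adj \<Longrightarrow> lin w"
  by (induction rule: weyl.induct) (auto simp: lin_def refl_add refl_smul)

lemma weyl_ip:
  assumes "simply_laced_diagram n adj" "w \<in> weyl n adj"
  shows "ip n adj (w u) (w v) = ip n adj u v"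
  using assms(2) by (induction arbitrary: u v rule: weyl.induct) (auto simp: ip_refl[OF assms(1)])

lemma weyl_refl: "i \<in> {1..n} \<Longrightarrow> refl n adj i \<in> weyl n adj"
  using weyl.weyl_step[OF weyl.weyl_id] by simp

lemma weyl_comp: assumes "w \<in> weyl n adj" "v \<in> weyl n adj" shows "w \<circ> v \<in> weyl n adj"
  using assms(1)
proof (induction rule: weyl.induct)
  case weyl_id then show ?case using assms(2) by simp
next
  case (weyl_step w i)
  have "refl n adj i \<circ> (w \<circ> v) \<in> weyl n adj" by (rule weyl.weyl_step[OF weyl_step.IH weyl_step.hyps(2)])
  then show ?case by (simp only: comp_assoc)
qed

lemma weyl_inv: "w \<in> weyl n adj \<Longrightarrow> \<exists>w'\<in>weyl n adj. w' \<circ> w = id \<and> w \<circ> w' = id"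
proof (induction rule: weyl.induct)
  case weyl_id then show ?case by (intro bexI[of _ id]) (auto intro: weyl.intros)
next
  case (weyl_step w i)
  then obtain w' where w': "w' \<in> weyl n adj" "w' \<circ> w = id" "w \<circ> w' = id" by blast
  have "w' \<circ> refl n adj i \<in> weyl n adj" using weyl_comp[OF w'(1) weyl_refl[OF weyl_step(2)]] .
  moreover have "(w' \<circ> refl n adj i) \<circ> (refl n adj i \<circ> w) = id"
  proof
    fix x show "((w' \<circ> refl n adj i) \<circ> (refl n adj i \<circ> w)) x = id x"
      using w'(2) refl_refl[OF weyl_step(2)] by (simp add: fun_eq_iff[of "w' \<circ> w"])
  qed
  moreover have "(refl n adj i \<circ> w) \<circ> (w' \<circ> refl n adj i) = id"
  proof
    fix x show "((refl n adj i \<circ> w) \<circ> (w' \<circ> refl n adj i)) x = id x"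
      using w'(3) refl_refl[OF weyl_step(2)] by (simp add: fun_eq_iff[of "w \<circ> w'"])
  qed
  ultimately show ?case by blast
qed

definition supp :: "nat \<Rightarrow> (nat \<Rightarrow> int) \<Rightarrow> bool" where
  "supp n v \<longleftrightarrow> (\<forall>k. k \<notin> {1..n} \<longrightarrow> v k = 0)"

lemma supp_alpha: "i \<in> {1..n} \<Longrightarrow> supp n (alpha i)"
  unfolding supp_def alpha_def by auto

lemma supp_refl: "i \<in> {1..n} \<Longrightarrow> supp n v \<Longrightarrow> supp n (refl n adj i v)"
  unfolding supp_def refl_def alpha_def by auto

lemma supp_weyl: "w \<in> weyl n adj \<Longrightarrow> supp n v \<Longrightarrow> supp n (w v)"
  by (induction arbitrary: v rule: weyl.induct) (auto simp: supp_refl)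

lemma weyl_zero: "w \<in> weyl n adj \<Longrightarrow> w (\<lambda>k. 0) = (\<lambda>k. 0)"
proof -
  assume "w \<in> weyl n adj"
  then have "\<forall>c u. w (\<lambda>k. c * u k) = (\<lambda>k. c * w u k)" using weyl_lin unfolding lin_def by blast
  from this[rule_format, of 0 "\<lambda>k. 0"] show ?thesis by simp
qed

definition dot :: "nat \<Rightarrow> (nat \<Rightarrow> int) \<Rightarrow> (nat \<Rightarrow> int) \<Rightarrow> int" where
  "dot n u v = (\<Sum>k\<in>{1..n}. u k * v k)"

definition Qf :: "nat \<Rightarrow> (nat \<Rightarrow> nat \<Rightarrow> bool) \<Rightarrow> (nat \<Rightarrow> int) \<Rightarrow> (nat \<Rightarrow> int) \<Rightarrow> int" where
  "Qf n adj u v = (\<Sum>g\<in>weyl n adj. dot n (g u) (g v))"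

lemma lin_lc: "lin g \<Longrightarrow> g (\<lambda>k. u k - c * a k) = (\<lambda>k. g u k - c * g a k)"
proof -
  assume l: "lin g"
  have m: "\<forall>c u. g (\<lambda>k. c * u k) = (\<lambda>k. c * g u k)" using l unfolding lin_def by blast
  have e: "g (\<lambda>k. u k - c * a k) = (\<lambda>k. g u k - g (\<lambda>k. c * a k) k)"
    using lin_diff[OF l, of u "\<lambda>k. c * a k"] by simp
  show ?thesis unfolding e m[rule_format] by simp
qed

lemma weyl_bij:
  assumes "h \<in> weyl n adj"
  shows "bij_betw (\<lambda>g. g \<circ> h) (weyl n adj) (weyl n adj)"
proof -
  obtain h' where h': "h' \<in> weyl n adj" "h' \<circ> h = id" "h \<circ> h' = id" using weyl_inv[OF assms] by blast
  show ?thesis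
  proof (rule bij_betw_byWitness[where f'="\<lambda>g. g \<circ> h'"])
    show "(\<lambda>g. g \<circ> h) ` weyl n adj \<subseteq> weyl n adj" using weyl_comp assms by blast
    show "(\<lambda>g. g \<circ> h') ` weyl n adj \<subseteq> weyl n adj" using weyl_comp h'(1) by blast
    show "\<forall>x\<in>weyl n adj. x \<circ> h \<circ> h' = x" using h'(3) by (simp add: comp_assoc)
    show "\<forall>x\<in>weyl n adj. x \<circ> h' \<circ> h = x" using h'(2) by (simp add: comp_assoc)
  qed
qed

lemma Qf_inv:
  assumes "h \<in> weyl n adj"
  shows "Qf n adj (h u) (h v) = Qf n adj u v"
proof -
  have "Qf n adj u v = (\<Sum>g\<in>weyl n adj. dot n (g u) (g v))" by (simp add: Qf_def)
  also have "\<dots> = (\<Sum>g\<in>weyl n adj. dot n ((g \<circ> h) u) ((g \<circ> h) v))"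
    using sum.reindex_bij_betw[OF weyl_bij[OF assms], of "\<lambda>g. dot n (g u) (g v)"] by simp
  finally show ?thesis by (simp add: Qf_def)
qed

lemma Qf_sym: "Qf n adj u v = Qf n adj v u"
  unfolding Qf_def dot_def by (simp add: mult.commute)

lemma Qf_lc1: "Qf n adj (\<lambda>k. u k - c * a k) v = Qf n adj u v - c * Qf n adj a v"
proof -
  have "Qf n adj (\<lambda>k. u k - c * a k) v = (\<Sum>g\<in>weyl n adj. dot n (g u) (g v) - c * dot n (g a) (g v))"
    unfolding Qf_def
  proof (intro sum.cong refl)
    fix g assume "g \<in> weyl n adj"
    then have "g (\<lambda>k. u k - c * a k) = (\<lambda>k. g u k - c * g a k)" using lin_lc weyl_lin by blast
    then show "dot n (g (\<lambda>k. u k - c * a k)) (g v) = dot n (g u) (g v) - c * dot n (g a) (g v)"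
      unfolding dot_def by (simp add: algebra_simps sum_subtractf sum_distrib_left)
  qed
  also have "\<dots> = Qf n adj u v - c * Qf n adj a v"
    unfolding Qf_def by (simp add: sum_subtractf sum_distrib_left)
  finally show ?thesis .
qed

lemma Qf_neg2: "Qf n adj u (\<lambda>k. - v k) = - Qf n adj u v"
proof -
  have "Qf n adj u (\<lambda>k. - v k) = (\<Sum>g\<in>weyl n adj. - dot n (g u) (g v))"
    unfolding Qf_def
  proof (intro sum.cong refl)
    fix g assume "g \<in> weyl n adj"
    then have "g (\<lambda>k. - v k) = (\<lambda>k. - g v k)" using lin_neg weyl_lin by blast
    then show "dot n (g u) (g (\<lambda>k. - v k)) = - dot n (g u) (g v)"
      unfolding dot_def by (simp add: sum_negf)
  qed
  then show ?thesis unfolding Qf_def by (simp add: sum_negf)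
qed

lemma refl_alpha: "i \<in> {1..n} \<Longrightarrow> refl n adj i (alpha i) = (\<lambda>k. - alpha i k)"
  unfolding refl_def by (rule ext) (simp add: ip_alpha_self)

lemma Qf_key:
  assumes "i \<in> {1..n}"
  shows "ip n adj v (alpha i) * Qf n adj (alpha i) (alpha i) = 2 * Qf n adj v (alpha i)"
proof -
  let ?s = "ip n adj v (alpha i)"
  have "Qf n adj v (alpha i) = Qf n adj (refl n adj i v) (refl n adj i (alpha i))"
    using Qf_inv[OF weyl_refl[OF assms]] by simp
  also have "\<dots> = Qf n adj (\<lambda>k. v k - ?s * alpha i k) (\<lambda>k. - alpha i k)"
    by (simp add: refl_alpha[OF assms]) (simp add: refl_def)
  also have "\<dots> = - (Qf n adj v (alpha i) - ?s * Qf n adj (alpha i) (alpha i))"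
    by (simp add: Qf_neg2 Qf_lc1)
  finally show ?thesis by simp
qed

lemma weyl_id_mem: "id \<in> weyl n adj" by (rule weyl.weyl_id)

lemma sum4_swap: "(\<Sum>i\<in>A. \<Sum>j\<in>A. \<Sum>g\<in>G. \<Sum>k\<in>A. F i j g k) = (\<Sum>g\<in>G. \<Sum>k\<in>A. \<Sum>i\<in>A. \<Sum>j\<in>A. F i j g k)"
proof -
  have "(\<Sum>i\<in>A. \<Sum>j\<in>A. \<Sum>g\<in>G. \<Sum>k\<in>A. F i j g k) = (\<Sum>i\<in>A. \<Sum>g\<in>G. \<Sum>j\<in>A. \<Sum>k\<in>A. F i j g k)"
    by (rule sum.cong[OF refl], rule sum.swap)
  also have "\<dots> = (\<Sum>g\<in>G. \<Sum>i\<in>A. \<Sum>j\<in>A. \<Sum>k\<in>A. F i j g k)" by (rule sum.swap)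
  also have "\<dots> = (\<Sum>g\<in>G. \<Sum>i\<in>A. \<Sum>k\<in>A. \<Sum>j\<in>A. F i j g k)"
    by (rule sum.cong[OF refl], rule sum.cong[OF refl], rule sum.swap)
  also have "\<dots> = (\<Sum>g\<in>G. \<Sum>k\<in>A. \<Sum>i\<in>A. \<Sum>j\<in>A. F i j g k)"
    by (rule sum.cong[OF refl], rule sum.swap)
  finally show ?thesis .
qed

lemma Qf_expand:
  fixes u :: "nat \<Rightarrow> real"
  shows "(\<Sum>i\<in>{1..n}. \<Sum>j\<in>{1..n}. u i * u j * of_int (Qf n adj (alpha i) (alpha j)))
       = (\<Sum>g\<in>weyl n adj. \<Sum>k\<in>{1..n}. (\<Sum>i\<in>{1..n}. u i * of_int (g (alpha i) k))^2)"
proof -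
  have "(\<Sum>i\<in>{1..n}. \<Sum>j\<in>{1..n}. u i * u j * of_int (Qf n adj (alpha i) (alpha j)))
     = (\<Sum>i\<in>{1..n}. \<Sum>j\<in>{1..n}. \<Sum>g\<in>weyl n adj. \<Sum>k\<in>{1..n}. (u i * of_int (g (alpha i) k)) * (u j * of_int (g (alpha j) k)))"
    unfolding Qf_def dot_def by (simp add: sum_distrib_left algebra_simps)
  also have "\<dots> = (\<Sum>g\<in>weyl n adj. \<Sum>k\<in>{1..n}. \<Sum>i\<in>{1..n}. \<Sum>j\<in>{1..n}. (u i * of_int (g (alpha i) k)) * (u j * of_int (g (alpha j) k)))"
    by (rule sum4_swap)
  also have "\<dots> = (\<Sum>g\<in>weyl n adj. \<Sum>k\<in>{1..n}. (\<Sum>i\<in>{1..n}. u i * of_int (g (alpha i) k))^2)"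
    by (simp add: power2_eq_square sum_product)
  finally show ?thesis .
qed

lemma Qf_pos_real:
  fixes u :: "nat \<Rightarrow> real"
  assumes fin: "finite (weyl n adj)" and nz: "\<exists>k\<in>{1..n}. u k \<noteq> 0"
  shows "(\<Sum>i\<in>{1..n}. \<Sum>j\<in>{1..n}. u i * u j * of_int (Qf n adj (alpha i) (alpha j))) > 0"
proof -
  let ?F = "\<lambda>g. \<Sum>k\<in>{1..n}. (\<Sum>i\<in>{1..n}. u i * of_int (g (alpha i) k))^2"
  have "?F id = (\<Sum>k\<in>{1..n}. (u k)^2)"
  proof (intro sum.cong refl)
    fix k assume k: "k \<in> {1..n}"
    have "(\<Sum>i\<in>{1..n}. u i * of_int (id (alpha i) k)) = (\<Sum>i\<in>{1..n}. if i = k then u i else 0)"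
      by (intro sum.cong refl) (auto simp: alpha_def)
    also have "\<dots> = u k" using k by (simp add: sum.delta)
    finally show "(\<Sum>i\<in>{1..n}. u i * of_int (id (alpha i) k))^2 = (u k)^2" by simp
  qed
  also have "\<dots> > 0"
  proof -
    obtain k where k: "k \<in> {1..n}" "u k \<noteq> 0" using nz by blast
    have "(u k)^2 \<le> (\<Sum>k\<in>{1..n}. (u k)^2)" by (rule member_le_sum) (use k in auto)
    moreover have "(u k)^2 > 0" using k by simp
    ultimately show ?thesis by linarith
  qed
  finally have "?F id > 0" .
  moreover have "?F id \<le> (\<Sum>g\<in>weyl n adj. ?F g)"
    by (rule member_le_sum[OF weyl_id_mem _ fin]) (simp add: sum_nonneg)
  ultimately show ?thesis unfolding Qf_expand by linarith
qed

lemma Qf_alpha_pos: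
  assumes fin: "finite (weyl n adj)" and i: "i \<in> {1..n}"
  shows "Qf n adj (alpha i) (alpha i) > 0"
proof -
  have "dot n (id (alpha i)) (id (alpha i)) = (\<Sum>k\<in>{1..n}. if k = i then 1 else 0)"
    unfolding dot_def alpha_def by (intro sum.cong refl) simp
  also have "\<dots> = 1" using i by simp
  finally have "dot n (id (alpha i)) (id (alpha i)) = 1" .
  moreover have "dot n (id (alpha i)) (id (alpha i)) \<le> Qf n adj (alpha i) (alpha i)"
    unfolding Qf_def by (rule member_le_sum[OF weyl_id_mem _ fin]) (simp add: dot_def sum_nonneg)
  ultimately show ?thesis by linarith
qed

lemma posdef:
  assumes sld: "simply_laced_diagram n adj" and fin: "finite (weyl n adj)"
    and nz: "\<exists>k\<in>{1..n}. v k \<noteq> 0"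
  shows "ip n adj v v > 0"
proof -
  define d where "d i = real_of_int (Qf n adj (alpha i) (alpha i))" for i
  define M where "M i j = real_of_int (Qf n adj (alpha i) (alpha j))" for i j
  have dpos: "d i > 0" if "i \<in> {1..n}" for i using Qf_alpha_pos[OF fin that] by (simp add: d_def)
  have cM: "real_of_int (cartan adj i j) = 2 * M i j / (sqrt (d i) * sqrt (d j))"
    if ij: "i \<in> {1..n}" "j \<in> {1..n}" for i j
  proof -
    have e1: "real_of_int (cartan adj i j) * d j = 2 * M i j"
      using Qf_key[OF ij(2), where v="alpha i"] ip_alpha_alpha[OF ij] unfolding d_def M_def
      by (metis of_int_mult of_int_numeral)
    have e2: "real_of_int (cartan adj i j) * d i = 2 * M i j"
      using Qf_key[OF ij(1), where v="alpha j"] ip_alpha_alpha[OF ij(2) ij(1)] cartan_sym[OF sld, of j i]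
        Qf_sym[where u="alpha j" and v="alpha i"] unfolding d_def M_def
      by (metis of_int_mult of_int_numeral)
    show ?thesis
    proof (cases "cartan adj i j = 0")
      case True then show ?thesis using e1 dpos[OF ij(2)] by simp
    next
      case False
      then have "d i = d j" using e1 e2 by (metis mult_cancel_left of_int_eq_0_iff)
      then have "sqrt (d i) * sqrt (d j) = d j" using dpos[OF ij(2)]
        by (simp add: real_sqrt_mult[symmetric])
      then show ?thesis using e1 dpos[OF ij(2)] by (simp add: field_simps)
    qed
  qed
  define u where "u i = real_of_int (v i) / sqrt (d i)" for i
  have unz: "\<exists>k\<in>{1..n}. u k \<noteq> 0" using nz dpos unfolding u_def by fastforce
  have "real_of_int (ip n adj v v) = (\<Sum>i\<in>{1..n}. \<Sum>j\<in>{1..n}. real_of_int (v i) * real_of_int (cartan adj i j) * real_of_int (v j))"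
    unfolding ip_def by simp
  also have "\<dots> = (\<Sum>i\<in>{1..n}. \<Sum>j\<in>{1..n}. 2 * (u i * u j * M i j))"
  proof (intro sum.cong refl)
    fix i j assume ij: "i \<in> {1..n}" "j \<in> {1..n}"
    show "real_of_int (v i) * real_of_int (cartan adj i j) * real_of_int (v j) = 2 * (u i * u j * M i j)"
      using cM[OF ij] dpos[OF ij(1)] dpos[OF ij(2)] unfolding u_def by (simp add: field_simps)
  qed
  also have "\<dots> = 2 * (\<Sum>i\<in>{1..n}. \<Sum>j\<in>{1..n}. u i * u j * M i j)"
    by (simp add: sum_distrib_left)
  also have "\<dots> > 0" using Qf_pos_real[OF fin unz] unfolding M_def by simp
  finally show ?thesis by simp
qed

lemma ip_even:
  assumes sld: "simply_laced_diagram n adj"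
  shows "even (ip n adj v v)"
proof -
  define f where "f i j = v i * cartan adj i j * v j" for i j
  have fs: "f i j = f j i" for i j unfolding f_def using cartan_sym[OF sld, of i j] by (simp add: algebra_simps)
  have "even (\<Sum>i\<in>{1..m}. \<Sum>j\<in>{1..m}. f i j)" for m
  proof (induction m)
    case 0 then show ?case by simp
  next
    case (Suc m)
    have ins: "{1..Suc m} = insert (Suc m) {1..m}" by auto
    have nin: "Suc m \<notin> {1..m}" by simp
    have A: "(\<Sum>i\<in>{1..Suc m}. \<Sum>j\<in>{1..Suc m}. f i j)
        = f (Suc m) (Suc m) + (\<Sum>j\<in>{1..m}. f (Suc m) j) + (\<Sum>i\<in>{1..m}. f i (Suc m)) + (\<Sum>i\<in>{1..m}. \<Sum>j\<in>{1..m}. f i j)"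
      unfolding ins by (simp only: sum.insert[OF finite_atLeastAtMost nin] sum.distrib add.assoc)
    have B: "(\<Sum>i\<in>{1..m}. f i (Suc m)) = (\<Sum>j\<in>{1..m}. f (Suc m) j)"
      by (intro sum.cong refl) (rule fs)
    have C: "f (Suc m) (Suc m) = 2 * (v (Suc m) * v (Suc m))" by (simp add: f_def cartan_def)
    have E: "(\<Sum>i\<in>{1..Suc m}. \<Sum>j\<in>{1..Suc m}. f i j) = 2 * (v (Suc m) * v (Suc m) + (\<Sum>j\<in>{1..m}. f (Suc m) j)) + (\<Sum>i\<in>{1..m}. \<Sum>j\<in>{1..m}. f i j)"
      unfolding A B C by simp
    show ?case unfolding E using Suc.IH by simp
  qed
  then show ?thesis unfolding ip_def f_def .
qed

lemma ip_ge2: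
  assumes sld: "simply_laced_diagram n adj" and fin: "finite (weyl n adj)"
    and nz: "\<exists>k\<in>{1..n}. v k \<noteq> 0"
  shows "ip n adj v v \<ge> 2"
  using posdef[OF sld fin nz] ip_even[OF sld, of v] by presburger

lemma ip_zero_vec: "(\<forall>k\<in>{1..n}. v k = 0) \<Longrightarrow> ip n adj v w = 0"
  unfolding ip_def by simp

lemma ip_nonneg:
  assumes sld: "simply_laced_diagram n adj" and fin: "finite (weyl n adj)"
  shows "ip n adj v v \<ge> 0"
  using posdef[OF sld fin, of v] ip_zero_vec[of n v adj v] by fastforce

lemma ip_eq0:
  assumes sld: "simply_laced_diagram n adj" and fin: "finite (weyl n adj)"
    and "ip n adj v v = 0"
  shows "\<forall>k\<in>{1..n}. v k = 0"
  using posdef[OF sld fin, of v] assms(3) by fastforce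

lemma cartan_offdiag: "i \<noteq> j \<Longrightarrow> cartan adj i j \<le> 0"
  unfolding cartan_def by auto

lemma norm2_sign:
  assumes sld: "simply_laced_diagram n adj" and fin: "finite (weyl n adj)"
    and n2: "ip n adj v v = 2"
  shows "(\<forall>k\<in>{1..n}. v k \<ge> 0) \<or> (\<forall>k\<in>{1..n}. v k \<le> 0)"
proof (rule ccontr)
  assume "\<not> ?thesis"
  then obtain k1 k2 where k: "k1 \<in> {1..n}" "v k1 < 0" "k2 \<in> {1..n}" "v k2 > 0"
    by (auto simp: not_le)
  define p where "p k = max (v k) 0" for k
  define q where "q k = max (- v k) 0" for k
  have vpq: "v = (\<lambda>k. p k - q k)" unfolding p_def q_def by (rule ext) auto
  have pq: "ip n adj p q \<le> 0"
    unfolding ip_def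
  proof (intro sum_nonpos)
    fix i j assume "i \<in> {1..n}" "j \<in> {1..n}"
    show "p i * cartan adj i j * q j \<le> 0"
    proof (cases "i = j")
      case True then show ?thesis unfolding p_def q_def by (auto simp: max_def)
    next
      case False
      have "p i \<ge> 0" "q j \<ge> 0" unfolding p_def q_def by auto
      moreover have "cartan adj i j \<le> 0" using cartan_offdiag[OF False] .
      ultimately show ?thesis by (meson mult_nonneg_nonpos mult_nonpos_nonneg)
    qed
  qed
  have pp: "ip n adj p p \<ge> 2"
    by (rule ip_ge2[OF sld fin]) (use k in \<open>auto simp: p_def intro!: bexI[of _ k2]\<close>)
  have qq: "ip n adj q q \<ge> 2"
    by (rule ip_ge2[OF sld fin]) (use k in \<open>auto simp: q_def intro!: bexI[of _ k1]\<close>)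
  have "ip n adj v v = ip n adj p p - ip n adj p q - ip n adj q p + ip n adj q q"
    unfolding vpq by (simp add: ip_diff1 ip_diff2)
  also have "ip n adj q p = ip n adj p q" by (rule ip_sym[OF sld])
  finally have "ip n adj v v = ip n adj p p + ip n adj q q - 2 * ip n adj p q" by simp
  then show False using pp qq pq n2 by linarith
qed

lemma ht_def': "ht n v = (\<Sum>k\<in>{1..n}. v k)" by (simp add: ht_def)

lemma norm2_ht:
  assumes sld: "simply_laced_diagram n adj" and fin: "finite (weyl n adj)"
    and n2: "ip n adj v v = 2"
  shows "ht n v \<noteq> 0"
proof
  assume h0: "ht n v = 0"
  have "\<forall>k\<in>{1..n}. v k = 0"
  proof (cases "\<forall>k\<in>{1..n}. v k \<ge> 0")
    case True
    then show ?thesis using h0 sum_nonneg_eq_0_iff[of "{1..n}" v] unfolding ht_def by auto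
  next
    case False
    then have a: "\<forall>k\<in>{1..n}. v k \<le> 0" using norm2_sign[OF sld fin n2] by blast
    have "(\<Sum>k\<in>{1..n}. - v k) = 0" using h0 unfolding ht_def by (simp add: sum_negf)
    then show ?thesis using a sum_nonneg_eq_0_iff[of "{1..n}" "\<lambda>k. - v k"] by auto
  qed
  then have "ip n adj v v = 0" by (rule ip_zero_vec)
  then show False using n2 by simp
qed

lemma ht_lc: "ht n (\<lambda>k. u k - c * a k) = ht n u - c * ht n a"
  unfolding ht_def by (simp add: sum_subtractf sum_distrib_left)
lemma ht_diff: "ht n (\<lambda>k. u k - a k) = ht n u - ht n a"
  unfolding ht_def by (simp add: sum_subtractf)
lemma ht_add: "ht n (\<lambda>k. u k + a k) = ht n u + ht n a"
  unfolding ht_def by (simp add: sum.distrib)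
lemma ht_neg: "ht n (\<lambda>k. - a k) = - ht n a"
  unfolding ht_def by (simp add: sum_negf)
lemma ht_alpha: "i \<in> {1..n} \<Longrightarrow> ht n (alpha i) = 1"
  unfolding ht_def alpha_def by simp

lemma ht_refl: "i \<in> {1..n} \<Longrightarrow> ht n (refl n adj i v) = ht n v - ip n adj v (alpha i)"
  unfolding refl_def by (simp add: ht_lc ht_alpha)

locale SL =
  fixes n :: nat and adj :: "nat \<Rightarrow> nat \<Rightarrow> bool"
  assumes sld: "simply_laced_diagram n adj" and fin: "finite (weyl n adj)"
begin

abbreviation "IP \<equiv> ip n adj"
abbreviation "R \<equiv> refl n adj"
abbreviation "W \<equiv> weyl n adj"
abbreviation "Phi \<equiv> roots n adj"
abbreviation "Pos \<equiv> pos_roots n adj"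
abbreviation "H \<equiv> ht n"

lemma ipsym: "IP u v = IP v u" by (rule ip_sym[OF sld])

lemma rootE: assumes "b \<in> Phi" obtains w i where "w \<in> W" "i \<in> {1..n}" "b = w (alpha i)"
  using assms unfolding roots_def by blast

lemma root_norm: "b \<in> Phi \<Longrightarrow> IP b b = 2"
  by (erule rootE) (simp add: weyl_ip[OF sld] ip_alpha_self)

lemma root_supp: "b \<in> Phi \<Longrightarrow> supp n b"
  by (erule rootE) (simp add: supp_weyl supp_alpha)

lemma alpha_root: "i \<in> {1..n} \<Longrightarrow> alpha i \<in> Phi"
  unfolding roots_def by (rule CollectI, rule exI[of _ id], rule exI[of _ i]) (simp add: weyl.weyl_id)

lemma weyl_root: "w \<in> W \<Longrightarrow> b \<in> Phi \<Longrightarrow> w b \<in> Phi"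
proof -
  assume w: "w \<in> W" and "b \<in> Phi"
  then obtain v i where "v \<in> W" "i \<in> {1..n}" "b = v (alpha i)" by (blast elim: rootE)
  then show ?thesis unfolding roots_def using weyl_comp[OF w \<open>v \<in> W\<close>]
    by (intro CollectI exI[of _ "w \<circ> v"] exI[of _ i]) simp
qed

lemma refl_root: "j \<in> {1..n} \<Longrightarrow> b \<in> Phi \<Longrightarrow> R j b \<in> Phi"
  using weyl_root[OF weyl_refl] by blast

lemma neg_root: "b \<in> Phi \<Longrightarrow> (\<lambda>k. - b k) \<in> Phi"
proof -
  assume "b \<in> Phi"
  then obtain w i where wi: "w \<in> W" "i \<in> {1..n}" "b = w (alpha i)" by (blast elim: rootE)
  have "(\<lambda>k. - b k) = w (R i (alpha i))"
    using wi lin_neg[OF weyl_lin[OF wi(1)]] by (simp add: refl_alpha)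
  then show ?thesis using weyl_root[OF wi(1) refl_root[OF wi(2) alpha_root[OF wi(2)]]] by simp
qed

lemma roots_finite: "finite Phi"
proof -
  have "Phi \<subseteq> (\<lambda>(w,i). w (alpha i)) ` (W \<times> {1..n})"
  proof
    fix x assume "x \<in> Phi"
    then obtain w i where "w \<in> W" "i \<in> {1..n}" "x = w (alpha i)" by (rule rootE)
    then show "x \<in> (\<lambda>(w,i). w (alpha i)) ` (W \<times> {1..n})" by (intro image_eqI[where x="(w,i)"]) auto
  qed
  then show ?thesis using fin by (meson finite_SigmaI finite_atLeastAtMost finite_imageI finite_subset)
qed

lemma pos_finite: "finite Pos"
  using roots_finite unfolding pos_roots_def by simp

lemma supp_eq: "supp n u \<Longrightarrow> supp n v \<Longrightarrow> (\<forall>k\<in>{1..n}. u k = v k) \<Longrightarrow> u = v"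
  unfolding supp_def by (rule ext) metis

lemma root_sign: "b \<in> Phi \<Longrightarrow> b \<in> Pos \<or> (\<lambda>k. - b k) \<in> Pos"
proof -
  assume b: "b \<in> Phi"
  have s: "supp n b" by (rule root_supp[OF b])
  from norm2_sign[OF sld fin root_norm[OF b]]
  show ?thesis
  proof
    assume "\<forall>k\<in>{1..n}. 0 \<le> b k"
    then have "\<forall>k. 0 \<le> b k" using s unfolding supp_def by (metis order_refl)
    then show ?thesis using b unfolding pos_roots_def by auto
  next
    assume "\<forall>k\<in>{1..n}. b k \<le> 0"
    then have "\<forall>k. 0 \<le> - b k" using s unfolding supp_def by (metis neg_0_le_iff_le order_refl)
    then show ?thesis using neg_root[OF b] unfolding pos_roots_def by auto
  qed
qed

lemma pos_root: "b \<in> Pos \<Longrightarrow> b \<in> Phi" unfolding pos_roots_def by simp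
lemma pos_nonneg: "b \<in> Pos \<Longrightarrow> 0 \<le> b k" unfolding pos_roots_def by simp

lemma pos_nz: assumes "b \<in> Pos" shows "\<exists>k\<in>{1..n}. b k > 0"
proof (rule ccontr)
  assume "\<not> ?thesis"
  then have "\<forall>k\<in>{1..n}. b k = 0" using pos_nonneg[OF assms] by (metis antisym not_le)
  then have "IP b b = 0" by (rule ip_zero_vec)
  then show False using root_norm[OF pos_root[OF assms]] by simp
qed

lemma pos_ht: assumes "b \<in> Pos" shows "H b \<ge> 1"
proof -
  obtain k where k: "k \<in> {1..n}" "b k > 0" using pos_nz[OF assms] by blast
  have "b k \<le> H b" unfolding ht_def by (rule member_le_sum) (use k pos_nonneg[OF assms] in auto)
  then show ?thesis using k by linarith
qed

lemma pos_neg_not: "b \<in> Pos \<Longrightarrow> (\<lambda>k. - b k) \<notin> Pos"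
proof
  assume b: "b \<in> Pos" and nb: "(\<lambda>k. - b k) \<in> Pos"
  obtain k where "b k > 0" using pos_nz[OF b] by blast
  moreover have "0 \<le> - b k" using pos_nonneg[OF nb, of k] by simp
  ultimately show False by simp
qed

lemma ip_bounds: assumes "b \<in> Phi" "c \<in> Phi" shows "IP b c \<le> 2" "IP b c \<ge> -2"
proof -
  have "IP (\<lambda>k. b k - c k) (\<lambda>k. b k - c k) \<ge> 0" by (rule ip_nonneg[OF sld fin])
  then show "IP b c \<le> 2" using root_norm[OF assms(1)] root_norm[OF assms(2)] ipsym[of c b]
    by (simp add: ip_diff1 ip_diff2)
  have "IP (\<lambda>k. b k + c k) (\<lambda>k. b k + c k) \<ge> 0" by (rule ip_nonneg[OF sld fin])
  then show "IP b c \<ge> -2" using root_norm[OF assms(1)] root_norm[OF assms(2)] ipsym[of c b]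
    by (simp add: ip_add1 ip_add2)
qed

lemma ip2_eq: assumes "b \<in> Phi" "c \<in> Phi" "IP b c = 2" shows "b = c"
proof -
  have "IP (\<lambda>k. b k - c k) (\<lambda>k. b k - c k) = 0"
    using root_norm[OF assms(1)] root_norm[OF assms(2)] ipsym[of c b] assms(3)
    by (simp add: ip_diff1 ip_diff2)
  then have "\<forall>k\<in>{1..n}. b k - c k = 0" by (rule ip_eq0[OF sld fin])
  then show ?thesis using root_supp[OF assms(1)] root_supp[OF assms(2)] by (intro supp_eq) auto
qed

lemma ipm2_eq: assumes "b \<in> Phi" "c \<in> Phi" "IP b c = -2" shows "b = (\<lambda>k. - c k)"
proof -
  have "IP b (\<lambda>k. - c k) = 2" using assms(3) by (simp add: ip_neg2)
  then show ?thesis using ip2_eq[OF assms(1) neg_root[OF assms(2)]] by blast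
qed

lemma pos_pair_alpha:
  assumes b: "b \<in> Pos" and j: "j \<in> {1..n}"
  shows "IP b (alpha j) \<in> {-1, 0, 1} \<or> b = alpha j"
proof -
  have r: "b \<in> Phi" "alpha j \<in> Phi" using pos_root[OF b] alpha_root[OF j] by auto
  have "IP b (alpha j) \<noteq> -2"
  proof
    assume "IP b (alpha j) = -2"
    then have "b = (\<lambda>k. - alpha j k)" using ipm2_eq[OF r] by blast
    then have "b j = -1" by (simp add: alpha_def)
    then show False using pos_nonneg[OF b, of j] by simp
  qed
  moreover have "IP b (alpha j) = 2 \<Longrightarrow> b = alpha j" using ip2_eq[OF r] by blast
  ultimately show ?thesis using ip_bounds[OF r] by force
qed

lemma refl_pos:
  assumes b: "b \<in> Pos" and j: "j \<in> {1..n}" and ne: "b \<noteq> alpha j"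
  shows "R j b \<in> Pos"
proof (rule ccontr)
  assume nP: "R j b \<notin> Pos"
  have rb: "R j b \<in> Phi" by (rule refl_root[OF j pos_root[OF b]])
  then have np: "(\<lambda>k. - R j b k) \<in> Pos" using root_sign nP by blast
  have other: "b k = 0" if "k \<noteq> j" for k
  proof -
    have "R j b k = b k" using that unfolding refl_def alpha_def by simp
    then show ?thesis using pos_nonneg[OF np, of k] pos_nonneg[OF b, of k] by simp
  qed
  have beq: "b = (\<lambda>k. b j * alpha j k)"
    by (rule ext) (auto simp: alpha_def other)
  have "IP b b = b j * b j * 2"
    by (subst (1 2) beq) (simp add: ip_smul1 ip_smul2 ip_alpha_self[OF j])
  then have "b j * b j = 1" using root_norm[OF pos_root[OF b]] by simp
  moreover have "b j \<ge> 0" by (rule pos_nonneg[OF b])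
  ultimately have "b j = 1" using zero_less_mult_iff by (smt (verit) mult_le_cancel_left1)
  then have "b = alpha j" using beq by simp
  then show False using ne by simp
qed

lemma alpha_pos: "j \<in> {1..n} \<Longrightarrow> alpha j \<in> Pos"
  using alpha_root unfolding pos_roots_def alpha_def by auto

end

definition Rp :: "nat \<Rightarrow> (nat \<Rightarrow> nat \<Rightarrow> bool) \<Rightarrow> nat \<Rightarrow> (nat \<Rightarrow> int) \<Rightarrow> (nat \<Rightarrow> int)" where
  "Rp n adj j b = (if b = alpha j then alpha j else refl n adj j b)"

context SL begin

lemma pos_alpha_iff: assumes "b \<in> Pos" "j \<in> {1..n}" shows "(IP b (alpha j) = 2) = (b = alpha j)"
proof (rule iffI)
  assume "IP b (alpha j) = 2"
  then show "b = alpha j" using ip2_eq[OF pos_root[OF assms(1)] alpha_root[OF assms(2)]] by simp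
next
  assume "b = alpha j"
  then show "IP b (alpha j) = 2" using ip_alpha_self[OF assms(2)] by simp
qed

lemma Rp_pos: "b \<in> Pos \<Longrightarrow> j \<in> {1..n} \<Longrightarrow> Rp n adj j b \<in> Pos"
  unfolding Rp_def using refl_pos[of b j] alpha_pos[of j] by (cases "b = alpha j") simp_all

lemma Rp_ip: assumes "b \<in> Pos" "j \<in> {1..n}" "l \<in> {1..n}"
  shows "IP (Rp n adj j b) (alpha l) = (if IP b (alpha j) = 2 then IP b (alpha l) else IP b (alpha l) - IP b (alpha j) * IP (alpha j) (alpha l))"
proof (cases "b = alpha j")
  case True then show ?thesis using pos_alpha_iff[OF assms(1,2)] by (simp add: Rp_def)
next
  case False
  then have "IP b (alpha j) \<noteq> 2" using pos_alpha_iff[OF assms(1,2)] by simp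
  then show ?thesis using False unfolding Rp_def refl_def by (simp add: ip_lin1)
qed

lemma Rp_ht: assumes "b \<in> Pos" "j \<in> {1..n}"
  shows "H (Rp n adj j b) = (if IP b (alpha j) = 2 then H b else H b - IP b (alpha j))"
proof (cases "b = alpha j")
  case True then show ?thesis using pos_alpha_iff[OF assms(1,2)] by (simp add: Rp_def)
next
  case False
  then have "IP b (alpha j) \<noteq> 2" using pos_alpha_iff[OF assms(1,2)] by simp
  then show ?thesis using False unfolding Rp_def by (simp add: ht_refl[OF assms(2)])
qed

lemma Rp_Rp: assumes "b \<in> Pos" "j \<in> {1..n}" shows "Rp n adj j (Rp n adj j b) = b"
proof (cases "b = alpha j")
  case True then show ?thesis by (simp add: Rp_def)
next
  case False
  have "R j b \<noteq> alpha j"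
  proof
    assume "R j b = alpha j"
    then have "R j (R j b) = R j (alpha j)" by simp
    then have "b = (\<lambda>k. - alpha j k)" using refl_refl[OF assms(2)] refl_alpha[OF assms(2)] by simp
    then show False using pos_neg_not[OF alpha_pos[OF assms(2)]] assms(1) by simp
  qed
  then show ?thesis using False refl_refl[OF assms(2)] by (simp add: Rp_def)
qed

lemma fun_neg_eq: "(- f) = (\<lambda>k. - f k)" by (rule ext) simp

lemma act_mem: "x \<in> act n adj g B \<longleftrightarrow> x \<in> Pos \<and> (\<exists>b\<in>B. x = g b \<or> x = (\<lambda>k. - g b k))"
  unfolding act_def by (simp add: fun_neg_eq)

lemma act_Rp: assumes "B \<subseteq> Pos" "j \<in> {1..n}" shows "act n adj (R j) B = Rp n adj j ` B"
proof (rule set_eqI)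
  fix x
  show "x \<in> act n adj (R j) B \<longleftrightarrow> x \<in> Rp n adj j ` B"
  proof
    assume "x \<in> act n adj (R j) B"
    then have x1: "x \<in> Pos" and "\<exists>b\<in>B. x = R j b \<or> x = (\<lambda>k. - R j b k)" by (simp_all only: act_mem)
    then obtain b where b: "b \<in> B" and x3: "x = R j b \<or> x = (\<lambda>k. - R j b k)" by blast
    have bP: "b \<in> Pos" using b assms(1) by blast
    show "x \<in> Rp n adj j ` B"
    proof (cases "b = alpha j")
      case True
      then have e: "R j b = (\<lambda>k. - alpha j k)" using refl_alpha[OF assms(2)] by simp
      have "(\<lambda>k. - alpha j k) \<notin> Pos" by (rule pos_neg_not[OF alpha_pos[OF assms(2)]])
      then have "x = alpha j" using x1 x3 unfolding e by auto
      then have "x = Rp n adj j b" using True by (simp add: Rp_def)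
      then show ?thesis by (rule rev_image_eqI[OF b])
    next
      case False
      then have rP: "R j b \<in> Pos" using refl_pos[OF bP assms(2)] by blast
      have "(\<lambda>k. - R j b k) \<notin> Pos" by (rule pos_neg_not[OF rP])
      then have "x = R j b" using x1 x3 by auto
      then have "x = Rp n adj j b" using False by (simp add: Rp_def)
      then show ?thesis by (rule rev_image_eqI[OF b])
    qed
  next
    assume "x \<in> Rp n adj j ` B"
    then obtain b where b: "b \<in> B" "x = Rp n adj j b" by blast
    have bP: "b \<in> Pos" using b(1) assms(1) by blast
    have "x \<in> Pos" using Rp_pos[OF bP assms(2)] b(2) by simp
    moreover have "x = R j b \<or> x = (\<lambda>k. - R j b k)"
    proof (cases "b = alpha j")
      case True then show ?thesis using b(2) refl_alpha[OF assms(2)] by (simp add: Rp_def)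
    next
      case False then show ?thesis using b(2) by (simp add: Rp_def)
    qed
    ultimately show "x \<in> act n adj (R j) B" using b(1) by (auto simp only: act_mem)
  qed
qed

end

locale ORB = SL +
  fixes B1 :: "(nat \<Rightarrow> int) set"
  assumes B1: "orth_pos_set n adj B1"
begin

abbreviation "Orb \<equiv> {act n adj w B1 | w. w \<in> W}"

lemma B1_pos: "B1 \<subseteq> Pos" using B1 unfolding orth_pos_set_def by blast

lemma act_comp: assumes g: "g \<in> W" and w: "w \<in> W"
  shows "act n adj g (act n adj w B1) = act n adj (g \<circ> w) B1"
proof
  have lg: "g (\<lambda>k. - x k) = (\<lambda>k. - g x k)" for x by (rule lin_neg[OF weyl_lin[OF g]])
  show "act n adj g (act n adj w B1) \<subseteq> act n adj (g \<circ> w) B1"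
  proof
    fix x assume "x \<in> act n adj g (act n adj w B1)"
    then have "x \<in> Pos \<and> (\<exists>d\<in>act n adj w B1. x = g d \<or> x = (\<lambda>k. - g d k))" by (rule act_mem[THEN iffD1])
    then obtain d where d: "x \<in> Pos" "d \<in> act n adj w B1" "x = g d \<or> x = (\<lambda>k. - g d k)" by blast
    from d(2) have "d \<in> Pos \<and> (\<exists>b\<in>B1. d = w b \<or> d = (\<lambda>k. - w b k))" by (rule act_mem[THEN iffD1])
    then obtain b where b: "b \<in> B1" "d = w b \<or> d = (\<lambda>k. - w b k)" by blast
    have "x = (g \<circ> w) b \<or> x = (\<lambda>k. - (g \<circ> w) b k)" using d(3) b(2) lg by auto
    then show "x \<in> act n adj (g \<circ> w) B1" using d(1) b(1) by (intro act_mem[THEN iffD2]) blast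
  qed
  show "act n adj (g \<circ> w) B1 \<subseteq> act n adj g (act n adj w B1)"
  proof
    fix x assume "x \<in> act n adj (g \<circ> w) B1"
    then have "x \<in> Pos \<and> (\<exists>b\<in>B1. x = (g \<circ> w) b \<or> x = (\<lambda>k. - (g \<circ> w) b k))" by (rule act_mem[THEN iffD1])
    then obtain b where b: "x \<in> Pos" "b \<in> B1" "x = g (w b) \<or> x = (\<lambda>k. - g (w b) k)" by auto
    have wb: "w b \<in> Phi" using weyl_root[OF w pos_root] b(2) B1_pos by blast
    show "x \<in> act n adj g (act n adj w B1)"
    proof (cases "w b \<in> Pos")
      case True
      then have "w b \<in> act n adj w B1" using b(2) by (intro act_mem[THEN iffD2]) blast
      then show ?thesis using b(1,3) by (intro act_mem[THEN iffD2]) blast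
    next
      case False
      then have "(\<lambda>k. - w b k) \<in> Pos" using root_sign[OF wb] by blast
      then have "(\<lambda>k. - w b k) \<in> act n adj w B1" using b(2) by (intro act_mem[THEN iffD2]) blast
      moreover have "x = g (\<lambda>k. - w b k) \<or> x = (\<lambda>k. - g (\<lambda>k. - w b k) k)" using b(3) lg by auto
      ultimately show ?thesis using b(1) by (intro act_mem[THEN iffD2]) blast
    qed
  qed
qed

lemma orb_closed: assumes "B \<in> Orb" "g \<in> W" shows "act n adj g B \<in> Orb"
proof -
  obtain w where w: "w \<in> W" "B = act n adj w B1" using assms(1) by blast
  have "act n adj g B = act n adj (g \<circ> w) B1" using act_comp[OF assms(2) w(1)] w(2) by simp
  moreover have "g \<circ> w \<in> W" by (rule weyl_comp[OF assms(2) w(1)])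
  ultimately show ?thesis by blast
qed

lemma orb_R: assumes "B \<in> Orb" "j \<in> {1..n}" shows "act n adj (R j) (act n adj (R j) B) = B"
proof -
  obtain w where w: "w \<in> W" "B = act n adj w B1" using assms(1) by blast
  have "act n adj (R j) (act n adj (R j) B) = act n adj (R j \<circ> (R j \<circ> w)) B1"
    using w act_comp weyl_comp weyl_refl[OF assms(2)] by simp
  also have "R j \<circ> (R j \<circ> w) = w" using refl_comp_self[OF assms(2)] by (simp add: comp_assoc[symmetric])
  finally show ?thesis using w by simp
qed

lemma orb_RR: assumes "B \<in> Orb" "i \<in> {1..n}" "j \<in> {1..n}"
  shows "act n adj (R i) (act n adj (R j) B) = act n adj (R i \<circ> R j) B"
proof -
  obtain w where w: "w \<in> W" "B = act n adj w B1" using assms(1) by blast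
  show ?thesis using w act_comp weyl_comp weyl_refl[OF assms(2)] weyl_refl[OF assms(3)]
    by (simp add: comp_assoc)
qed

lemma orb_pos: "B \<in> Orb \<Longrightarrow> B \<subseteq> Pos" using act_mem by blast

lemma orb_fin: "B \<in> Orb \<Longrightarrow> finite B" using orb_pos[of B] pos_finite by (rule finite_subset)

lemma orb_orth: assumes "B \<in> Orb" "x \<in> B" "y \<in> B" "x \<noteq> y" shows "IP x y = 0"
proof -
  obtain w where w: "w \<in> W" "B = act n adj w B1" using assms(1) by blast
  obtain b where b: "b \<in> B1" "x = w b \<or> x = (\<lambda>k. - w b k)" using act_mem[THEN iffD1, OF assms(2)[unfolded w(2)]] by blast
  obtain c where c: "c \<in> B1" "y = w c \<or> y = (\<lambda>k. - w c k)" using act_mem[THEN iffD1, OF assms(3)[unfolded w(2)]] by blast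
  have xP: "x \<in> Pos" "y \<in> Pos" using assms(2,3) orb_pos[OF assms(1)] by auto
  have "b \<noteq> c"
  proof
    assume "b = c"
    then have "x = y \<or> x = (\<lambda>k. - y k)" using b(2) c(2) by auto
    then show False using assms(4) pos_neg_not xP by auto
  qed
  then have "IP b c = 0" using B1 b(1) c(1) unfolding orth_pos_set_def by blast
  then have "IP (w b) (w c) = 0" using weyl_ip[OF sld w(1)] by simp
  then show ?thesis using b(2) c(2) by (auto simp: ip_neg1 ip_neg2)
qed

end

definition up :: "nat \<Rightarrow> (nat \<Rightarrow> nat \<Rightarrow> bool) \<Rightarrow> nat \<Rightarrow> (nat \<Rightarrow> int) set \<Rightarrow> bool" where
  "up n adj j B \<longleftrightarrow> (\<exists>b\<in>B. ip n adj b (alpha j) = -1 \<and>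
      (\<forall>d\<in>B. ip n adj d (alpha j) = 1 \<longrightarrow> ht n b < ht n d))"

definition fixd :: "nat \<Rightarrow> (nat \<Rightarrow> nat \<Rightarrow> bool) \<Rightarrow> nat \<Rightarrow> (nat \<Rightarrow> int) set \<Rightarrow> bool" where
  "fixd n adj j B \<longleftrightarrow> (\<forall>b\<in>B. ip n adj b (alpha j) \<noteq> 1 \<and> ip n adj b (alpha j) \<noteq> -1)"

lemma min_less_iff:
  fixes f :: "'a \<Rightarrow> int"
  assumes "finite A" "A \<noteq> {}" "finite A'" "A' \<noteq> {}"
  shows "Min (f ` A) < Min (f ` A') \<longleftrightarrow> (\<exists>a\<in>A. \<forall>b\<in>A'. f a < f b)"
proof
  assume lt: "Min (f ` A) < Min (f ` A')"
  have "Min (f ` A) \<in> f ` A" using Min_in[of "f ` A"] assms(1,2) by auto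
  then obtain a where a: "a \<in> A" "Min (f ` A) = f a" by blast
  have "\<forall>b\<in>A'. f a < f b"
  proof
    fix b assume "b \<in> A'"
    then have "Min (f ` A') \<le> f b" using assms(3) by simp
    then show "f a < f b" using lt a(2) by linarith
  qed
  then show "\<exists>a\<in>A. \<forall>b\<in>A'. f a < f b" using a(1) by blast
next
  assume "\<exists>a\<in>A. \<forall>b\<in>A'. f a < f b"
  then obtain a where a: "a \<in> A" "\<forall>b\<in>A'. f a < f b" by blast
  have "Min (f ` A') \<in> f ` A'" using Min_in[of "f ` A'"] assms(3,4) by auto
  then obtain b where b: "b \<in> A'" "Min (f ` A') = f b" by blast
  have "Min (f ` A) \<le> f a" using a(1) assms(1) by simp
  then show "Min (f ` A) < Min (f ` A')" using a(2) b by force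
qed

lemma ex_min_int:
  fixes f :: "'a \<Rightarrow> int"
  assumes "finite A" "A \<noteq> {}"
  shows "\<exists>a\<in>A. \<forall>b\<in>A. f a \<le> f b"
proof -
  have "Min (f ` A) \<in> f ` A" using Min_in[of "f ` A"] assms by auto
  then obtain a where a: "a \<in> A" "Min (f ` A) = f a" by blast
  have "\<forall>b\<in>A. f a \<le> f b" using a(2) assms(1) by (metis Min_le finite_imageI imageI)
  then show ?thesis using a(1) by blast
qed

lemma sq_lc: assumes "simply_laced_diagram n adj"
  shows "ip n adj (\<lambda>k. u k - c * a k) (\<lambda>k. u k - c * a k) = ip n adj u u - 2 * c * ip n adj u a + c * c * ip n adj a a"
proof -
  have "ip n adj (\<lambda>k. u k - c * a k) (\<lambda>k. u k - c * a k) = ip n adj u (\<lambda>k. u k - c * a k) - c * ip n adj a (\<lambda>k. u k - c * a k)"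
    by (rule ip_lin1)
  also have "\<dots> = (ip n adj u u - c * ip n adj u a) - c * (ip n adj a u - c * ip n adj a a)"
    by (simp only: ip_lin2)
  also have "ip n adj a u = ip n adj u a" by (rule ip_sym[OF assms])
  finally show ?thesis by (simp add: algebra_simps)
qed

lemma pair_formula:
  assumes sld: "simply_laced_diagram n adj" and i: "i \<in> {1..n}" and j: "j \<in> {1..n}"
  shows "ip n adj (\<lambda>k. s k - t k - x * alpha i k - y * alpha j k) (\<lambda>k. s k - t k - x * alpha i k - y * alpha j k)
    = ip n adj s s + ip n adj t t - 2 * ip n adj s t - 2 * x * ip n adj s (alpha i) - 2 * y * ip n adj s (alpha j)
      + 2 * x * ip n adj t (alpha i) + 2 * y * ip n adj t (alpha j) + 2 * x * x + 2 * y * y + 2 * x * y * ip n adj (alpha i) (alpha j)"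
proof -
  have e1: "ip n adj (\<lambda>k. s k - t k - x * alpha i k - y * alpha j k) (\<lambda>k. s k - t k - x * alpha i k - y * alpha j k)
     = ip n adj (\<lambda>k. s k - t k - x * alpha i k) (\<lambda>k. s k - t k - x * alpha i k)
       - 2 * y * ip n adj (\<lambda>k. s k - t k - x * alpha i k) (alpha j) + y * y * 2"
    using sq_lc[OF sld, of "\<lambda>k. s k - t k - x * alpha i k" y "alpha j"] ip_alpha_self[OF j] by simp
  have e2: "ip n adj (\<lambda>k. s k - t k - x * alpha i k) (\<lambda>k. s k - t k - x * alpha i k)
     = ip n adj (\<lambda>k. s k - t k) (\<lambda>k. s k - t k) - 2 * x * ip n adj (\<lambda>k. s k - t k) (alpha i) + x * x * 2"
    using sq_lc[OF sld, of "\<lambda>k. s k - t k" x "alpha i"] ip_alpha_self[OF i] by simp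
  have e3: "ip n adj (\<lambda>k. s k - t k - x * alpha i k) (alpha j) = ip n adj s (alpha j) - ip n adj t (alpha j) - x * ip n adj (alpha i) (alpha j)"
    using ip_lin1[of n adj "\<lambda>k. s k - t k" x "alpha i" "alpha j"] ip_diff1[of n adj s t "alpha j"] by simp
  have e4: "ip n adj (\<lambda>k. s k - t k) (alpha i) = ip n adj s (alpha i) - ip n adj t (alpha i)"
    by (rule ip_diff1)
  have e5: "ip n adj (\<lambda>k. s k - t k) (\<lambda>k. s k - t k) = ip n adj s s - 2 * ip n adj s t + ip n adj t t"
    using ip_diff1[of n adj s t "\<lambda>k. s k - t k"] ip_diff2[of n adj s s t] ip_diff2[of n adj t s t] ip_sym[OF sld, of t s]
    by simp
  show ?thesis unfolding e1 e2 e3 e4 e5 by (simp add: algebra_simps)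
qed


context SL begin

lemma pair_ht:
  assumes i: "i \<in> {1..n}" and j: "j \<in> {1..n}"
  shows "H (\<lambda>k. s k - t k - x * alpha i k - y * alpha j k) = H s - H t - x - y"
  by (simp only: ht_lc ht_diff ht_alpha[OF i] ht_alpha[OF j]) (simp add: algebra_simps)?

lemma pair_constraint:
  assumes i: "i \<in> {1..n}" and j: "j \<in> {1..n}"
    and n2: "IP s s + IP t t - 2 * IP s t - 2 * x * IP s (alpha i) - 2 * y * IP s (alpha j)
      + 2 * x * IP t (alpha i) + 2 * y * IP t (alpha j) + 2 * x * x + 2 * y * y + 2 * x * y * IP (alpha i) (alpha j) = 2"
  shows "H s - H t - x - y \<noteq> 0"
  using norm2_ht[OF sld fin, of "\<lambda>k. s k - t k - x * alpha i k - y * alpha j k"]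
  unfolding pair_formula[OF sld i j] pair_ht[OF i j] using n2 by simp

lemma no_gap:
  assumes j: "j \<in> {1..n}" and a: "a \<in> Phi" and b: "b \<in> Phi" and ab: "IP b a = 0"
    and pa: "IP a (alpha j) = -1" and pb: "IP b (alpha j) = 1"
  shows "H b \<noteq> H a + 1"
  using pair_constraint[OF j j, of b a 0 1] root_norm[OF a] root_norm[OF b] ab pa pb ip_alpha_self[OF j]
  by simp

end

context ORB begin

lemma orb_pair: assumes "B \<in> Orb" "b \<in> B" "j \<in> {1..n}" shows "IP b (alpha j) \<in> {-1,0,1} \<or> b = alpha j"
proof -
  have "b \<in> Pos" using orb_pos[OF assms(1)] assms(2) by (rule subsetD)
  then show ?thesis using pos_pair_alpha[OF _ assms(3)] by simp
qed

lemma refl_fixed: assumes "R j b = b" shows "IP b (alpha j) = 0"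
proof -
  have "R j b j = b j" using assms by simp
  then show ?thesis unfolding refl_def alpha_def by simp
qed

lemma refl_zero: "IP b (alpha j) = 0 \<Longrightarrow> R j b = b"
  unfolding refl_def by simp

lemma Rp_fix: assumes "b \<in> Pos" "j \<in> {1..n}" "IP b (alpha j) \<noteq> 1" "IP b (alpha j) \<noteq> -1"
  shows "Rp n adj j b = b"
  using pos_pair_alpha[OF assms(1,2)] assms(3,4) refl_zero[of b j] unfolding Rp_def by auto

lemma ip_self_refl: assumes "j \<in> {1..n}" "b \<in> Phi"
  shows "IP b (R j b) = 2 - IP b (alpha j) * IP b (alpha j)"
  unfolding refl_def using root_norm[OF assms(2)] by (simp add: ip_lin2)

lemma mem_image_iff:
  assumes B: "B \<in> Orb" and j: "j \<in> {1..n}" and b: "b \<in> B"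
  shows "b \<in> Rp n adj j ` B \<longleftrightarrow> IP b (alpha j) \<noteq> 1 \<and> IP b (alpha j) \<noteq> -1"
proof
  have bP: "b \<in> Pos" using b orb_pos[OF B] by blast
  assume "b \<in> Rp n adj j ` B"
  then obtain c where c: "c \<in> B" "b = Rp n adj j c" by blast
  have cP: "c \<in> Pos" using c(1) orb_pos[OF B] by blast
  show "IP b (alpha j) \<noteq> 1 \<and> IP b (alpha j) \<noteq> -1"
  proof (cases "c = alpha j")
    case True then show ?thesis using c(2) ip_alpha_self[OF j] by (simp add: Rp_def)
  next
    case False
    then have bc: "b = R j c" using c(2) by (simp add: Rp_def)
    then have cb: "c = R j b" using refl_refl[OF j] by simp
    show ?thesis
    proof (rule ccontr)
      assume h: "\<not> ?thesis"
      then have "IP b (R j b) = 1" using ip_self_refl[OF j pos_root[OF bP]] by auto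
      moreover have "c \<noteq> b" using h cb refl_fixed[of j b] by auto
      ultimately show False using orb_orth[OF B b c(1)] cb by auto
    qed
  qed
next
  assume "IP b (alpha j) \<noteq> 1 \<and> IP b (alpha j) \<noteq> -1"
  then have "Rp n adj j b = b" using Rp_fix[OF _ j] b orb_pos[OF B] by blast
  then show "b \<in> Rp n adj j ` B" using b by (metis image_eqI)
qed

lemma Rp_mem_iff:
  assumes B: "B \<in> Orb" and j: "j \<in> {1..n}" and b: "b \<in> B"
  shows "Rp n adj j b \<in> B \<longleftrightarrow> IP b (alpha j) \<noteq> 1 \<and> IP b (alpha j) \<noteq> -1"
proof
  have bP: "b \<in> Pos" using b orb_pos[OF B] by blast
  assume m: "Rp n adj j b \<in> B"
  show "IP b (alpha j) \<noteq> 1 \<and> IP b (alpha j) \<noteq> -1"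
  proof (rule ccontr)
    assume h: "\<not> ?thesis"
    then have ne: "b \<noteq> alpha j" using ip_alpha_self[OF j] by auto
    then have e: "Rp n adj j b = R j b" by (simp add: Rp_def)
    have "IP b (R j b) = 1" using h ip_self_refl[OF j pos_root[OF bP]] by auto
    moreover have "R j b \<noteq> b" using h refl_fixed[of j b] by auto
    ultimately show False using orb_orth[OF B b m[unfolded e]] by auto
  qed
next
  assume "IP b (alpha j) \<noteq> 1 \<and> IP b (alpha j) \<noteq> -1"
  then have "Rp n adj j b = b" using Rp_fix[OF _ j] b orb_pos[OF B] by blast
  then show "Rp n adj j b \<in> B" using b by simp
qed

lemma fixd_eq: assumes B: "B \<in> Orb" and j: "j \<in> {1..n}" and f: "fixd n adj j B"
  shows "act n adj (R j) B = B"
proof -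
  have "Rp n adj j ` B = B"
  proof (rule set_eqI)
    fix x show "x \<in> Rp n adj j ` B \<longleftrightarrow> x \<in> B"
    proof
      assume "x \<in> Rp n adj j ` B"
      then obtain b where "b \<in> B" "x = Rp n adj j b" by blast
      then show "x \<in> B" using Rp_mem_iff[OF B j] f unfolding fixd_def by blast
    next
      assume "x \<in> B" then show "x \<in> Rp n adj j ` B" using mem_image_iff[OF B j] f unfolding fixd_def by blast
    qed
  qed
  then show ?thesis using act_Rp[OF orb_pos[OF B] j] by simp
qed

lemma prec_iff:
  assumes B: "B \<in> Orb" and j: "j \<in> {1..n}"
  shows "prec n B (act n adj (R j) B) \<longleftrightarrow> up n adj j B"
proof -
  define C where "C = act n adj (R j) B"
  have C: "C = Rp n adj j ` B" unfolding C_def by (rule act_Rp[OF orb_pos[OF B] j])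
  define M where "M = {b\<in>B. IP b (alpha j) = 1 \<or> IP b (alpha j) = -1}"
  have BP: "B \<subseteq> Pos" by (rule orb_pos[OF B])
  have finB: "finite B" by (rule orb_fin[OF B])
  have finM: "finite M" using finB unfolding M_def by simp
  have BC: "B - C = M" unfolding C M_def using mem_image_iff[OF B j] by auto
  have CB: "C - B = Rp n adj j ` M"
  proof (rule set_eqI)
    fix x show "x \<in> C - B \<longleftrightarrow> x \<in> Rp n adj j ` M"
      unfolding C M_def using Rp_mem_iff[OF B j] by auto
  qed
  have hRp: "H (Rp n adj j b) = H b - IP b (alpha j)" if "b \<in> M" for b
    using that Rp_ht[OF _ j, of b] BP unfolding M_def by auto
  have eqBC: "B = C \<longleftrightarrow> M = {}" using BC CB by auto
  have "prec n B C \<longleftrightarrow> M \<noteq> {} \<and> (\<exists>a\<in>M. \<forall>b\<in>M. H a < H b - IP b (alpha j))"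
  proof (cases "M = {}")
    case True then show ?thesis unfolding prec_def using eqBC by simp
  next
    case False
    have "Min (H ` (B - C)) < Min (H ` (C - B)) \<longleftrightarrow> (\<exists>a\<in>M. \<forall>c\<in>Rp n adj j ` M. H a < H c)"
      unfolding BC CB by (rule min_less_iff) (use finM False in auto)
    also have "\<dots> \<longleftrightarrow> (\<exists>a\<in>M. \<forall>b\<in>M. H a < H b - IP b (alpha j))" using hRp by auto
    finally show ?thesis unfolding prec_def using eqBC False by simp
  qed
  also have "\<dots> \<longleftrightarrow> up n adj j B"
  proof
    assume "M \<noteq> {} \<and> (\<exists>a\<in>M. \<forall>b\<in>M. H a < H b - IP b (alpha j))"
    then obtain a where a: "a \<in> M" "\<forall>b\<in>M. H a < H b - IP b (alpha j)" by blast
    have "IP a (alpha j) = -1" using a unfolding M_def by auto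
    moreover have "\<forall>d\<in>B. IP d (alpha j) = 1 \<longrightarrow> H a < H d" using a unfolding M_def by force
    ultimately show "up n adj j B" unfolding up_def using a(1) unfolding M_def by blast
  next
    assume "up n adj j B"
    then obtain b0 where b0: "b0 \<in> B" "IP b0 (alpha j) = -1" "\<forall>d\<in>B. IP d (alpha j) = 1 \<longrightarrow> H b0 < H d"
      unfolding up_def by blast
    define N where "N = {b\<in>B. IP b (alpha j) = -1}"
    have "finite N" "N \<noteq> {}" using finB b0 unfolding N_def by auto
    then obtain a where a: "a \<in> N" "\<forall>b\<in>N. H a \<le> H b" using ex_min_int by blast
    have aB: "a \<in> B" "IP a (alpha j) = -1" using a(1) unfolding N_def by auto
    have "\<forall>b\<in>M. H a < H b - IP b (alpha j)"
    proof
      fix b assume bM: "b \<in> M"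
      show "H a < H b - IP b (alpha j)"
      proof (cases "IP b (alpha j) = -1")
        case True then show ?thesis using a(2) bM unfolding N_def M_def by force
      next
        case False
        then have pb: "IP b (alpha j) = 1" using bM unfolding M_def by auto
        have bB: "b \<in> B" using bM unfolding M_def by auto
        have "H a \<le> H b0" using a(2) b0 unfolding N_def by auto
        moreover have "H b0 < H b" using b0(3) bB pb by auto
        moreover have "a \<noteq> b" using aB pb by auto
        then have "H b \<noteq> H a + 1"
          using no_gap[OF j pos_root pos_root _ aB(2) pb] orb_orth[OF B bB aB(1)] BP aB(1) bB by blast
        ultimately show ?thesis using pb by linarith
      qed
    qed
    moreover have "a \<in> M" using aB unfolding M_def by auto
    ultimately show "M \<noteq> {} \<and> (\<exists>a\<in>M. \<forall>b\<in>M. H a < H b - IP b (alpha j))" by blast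
  qed
  finally show ?thesis unfolding C_def .
qed

end

definition tok :: "int \<Rightarrow> int \<Rightarrow> int \<Rightarrow> int \<Rightarrow> bool" where
  "tok c a b h \<longleftrightarrow> (a = -1 \<or> a = 0 \<or> a = 1 \<or> a = 2) \<and> (b = -1 \<or> b = 0 \<or> b = 1 \<or> b = 2) \<and> h \<ge> 1 \<and>
     (a = 2 \<longrightarrow> b = c \<and> h = 1) \<and> (b = 2 \<longrightarrow> a = c \<and> h = 1) \<and>
     (c = -1 \<longrightarrow> a + b \<ge> -1 \<and> (a = 1 \<and> b = 1 \<longrightarrow> h = 2))"

definition pairf :: "int \<Rightarrow> int \<Rightarrow> int \<Rightarrow> int \<Rightarrow> int \<Rightarrow> int \<Rightarrow> int \<Rightarrow> bool" where
  "pairf c a1 b1 h1 a2 b2 h2 \<longleftrightarrow>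
     (a2 = 2 \<longrightarrow> a1 = 0) \<and> (b2 = 2 \<longrightarrow> b1 = 0) \<and> (c = -1 \<longrightarrow> a2 = 1 \<and> b2 = 1 \<longrightarrow> a1 + b1 = 0) \<and>
     (b1 - b2 = 2 \<longrightarrow> h1 - h2 \<noteq> 1) \<and> (a1 - a2 = 2 \<longrightarrow> h1 - h2 \<noteq> 1) \<and>
     ((a1 + b1) - (a2 + b2) = 3 + c \<longrightarrow> h1 - h2 \<noteq> 2)"

definition rel :: "bool \<Rightarrow> int \<Rightarrow> int \<Rightarrow> int \<Rightarrow> int \<Rightarrow> int \<Rightarrow> int \<Rightarrow> int \<Rightarrow> bool" where
  "rel e c a1 b1 h1 a2 b2 h2 \<longleftrightarrow> (if e then a1 = a2 \<and> b1 = b2 \<and> h1 = h2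
     else pairf c a1 b1 h1 a2 b2 h2 \<and> pairf c a2 b2 h2 a1 b1 h1)"

definition RA :: "int \<Rightarrow> int \<Rightarrow> int \<Rightarrow> int" where "RA c a b = (if a = 2 then a else -a)"
definition RB :: "int \<Rightarrow> int \<Rightarrow> int \<Rightarrow> int" where "RB c a b = (if a = 2 then b else b - a*c)"
definition RH :: "int \<Rightarrow> int \<Rightarrow> int \<Rightarrow> int \<Rightarrow> int" where "RH c a b h = (if a = 2 then h else h - a)"

lemma adjA:
  fixes a1 b1 h1 a2 b2 h2 a3 b3 h3 :: int
  assumes "tok (-1) a1 b1 h1" "tok (-1) a2 b2 h2" "tok (-1) a3 b3 h3"
    "rel e12 (-1) a1 b1 h1 a2 b2 h2" "rel e13 (-1) a1 b1 h1 a3 b3 h3" "rel e23 (-1) a2 b2 h2 a3 b3 h3"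
    "a1 = -1" "a2 = 1 \<longrightarrow> h1 < h2" "a3 = 1 \<longrightarrow> h1 < h3"
    "b2 = -1" "b1 = 1 \<longrightarrow> h2 < h1" "b3 = 1 \<longrightarrow> h2 < h3"
    "RB (-1) a3 b3 = 1"
    "RB (-1) a1 b1 = -1 \<longrightarrow> RH (-1) a3 b3 h3 \<le> RH (-1) a1 b1 h1"
    "RB (-1) a2 b2 = -1 \<longrightarrow> RH (-1) a3 b3 h3 \<le> RH (-1) a2 b2 h2"
  shows False
  using assms unfolding tok_def pairf_def rel_def RA_def RB_def RH_def
  by (smt (z3))

lemma adjA2:
  fixes a1 b1 h1 a2 b2 h2 a3 b3 h3 :: int
  assumes "tok (-1) a1 b1 h1" "tok (-1) a2 b2 h2" "tok (-1) a3 b3 h3"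
    "rel e12 (-1) a1 b1 h1 a2 b2 h2" "rel e13 (-1) a1 b1 h1 a3 b3 h3" "rel e23 (-1) a2 b2 h2 a3 b3 h3"
    "a1 = -1" "a2 = 1 \<longrightarrow> h1 < h2" "a3 = 1 \<longrightarrow> h1 < h3"
    "b2 = -1" "b1 = 1 \<longrightarrow> h2 < h1" "b3 = 1 \<longrightarrow> h2 < h3"
    "RB (-1) (RB (-1) a3 b3) (RA (-1) a3 b3) = 1"
    "RB (-1) (RB (-1) a1 b1) (RA (-1) a1 b1) = -1 \<longrightarrow> RH (-1) (RB (-1) a3 b3) (RA (-1) a3 b3) (RH (-1) a3 b3 h3) \<le> RH (-1) (RB (-1) a1 b1) (RA (-1) a1 b1) (RH (-1) a1 b1 h1)"
    "RB (-1) (RB (-1) a2 b2) (RA (-1) a2 b2) = -1 \<longrightarrow> RH (-1) (RB (-1) a3 b3) (RA (-1) a3 b3) (RH (-1) a3 b3 h3) \<le> RH (-1) (RB (-1) a2 b2) (RA (-1) a2 b2) (RH (-1) a2 b2 h2)"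
  shows False
  using assms unfolding tok_def pairf_def rel_def RA_def RB_def RH_def
  by (smt (z3))

lemma nonadj:
  fixes a1 b1 h1 a2 b2 h2 a3 b3 h3 :: int
  assumes "tok 0 a1 b1 h1" "tok 0 a2 b2 h2" "tok 0 a3 b3 h3"
    "rel e12 0 a1 b1 h1 a2 b2 h2" "rel e13 0 a1 b1 h1 a3 b3 h3" "rel e23 0 a2 b2 h2 a3 b3 h3"
    "a1 = -1" "a2 = 1 \<longrightarrow> h1 < h2" "a3 = 1 \<longrightarrow> h1 < h3"
    "b2 = -1" "b1 = 1 \<longrightarrow> h2 < h1" "b3 = 1 \<longrightarrow> h2 < h3"
    "RB 0 a3 b3 = 1"
    "RB 0 a1 b1 = -1 \<longrightarrow> RH 0 a3 b3 h3 \<le> RH 0 a1 b1 h1"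
    "RB 0 a2 b2 = -1 \<longrightarrow> RH 0 a3 b3 h3 \<le> RH 0 a2 b2 h2"
  shows "a2 = -1 \<and> b2 = -1 \<and> a3 = 1 \<and> b3 = 1 \<and> h3 = h2 + 2 \<and> \<not> e23"
  using assms unfolding tok_def pairf_def rel_def RA_def RB_def RH_def
  by (smt (z3))

context ORB begin

lemma orb_act_comp: assumes B: "B \<in> Orb" and g: "g \<in> W" and h: "h \<in> W"
  shows "act n adj g (act n adj h B) = act n adj (g \<circ> h) B"
proof -
  obtain w where w: "w \<in> W" "B = act n adj w B1" using B by blast
  have "act n adj g (act n adj h B) = act n adj (g \<circ> (h \<circ> w)) B1"
    using w act_comp[OF h w(1)] act_comp[OF g weyl_comp[OF h w(1)]] by simp
  also have "\<dots> = act n adj ((g \<circ> h) \<circ> w) B1" by (simp add: comp_assoc)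
  also have "\<dots> = act n adj (g \<circ> h) B" using w act_comp[OF weyl_comp[OF g h] w(1)] by simp
  finally show ?thesis .
qed

lemma ip_R_alpha: "IP (R i v) (alpha l) = IP v (alpha l) - IP v (alpha i) * IP (alpha i) (alpha l)"
  unfolding refl_def by (simp add: ip_lin1)

lemma braid:
  assumes i: "i \<in> {1..n}" and j: "j \<in> {1..n}" and c: "IP (alpha i) (alpha j) = -1"
  shows "R i (R j (R i v)) = R j (R i (R j v))"
proof -
  have c': "IP (alpha j) (alpha i) = -1" using c ipsym by simp
  have F: "R x (R y (R x v)) = (\<lambda>k. v k - (IP v (alpha x) + IP v (alpha y)) * (alpha x k + alpha y k))"
    if x: "x \<in> {1..n}" and y: "y \<in> {1..n}" and cxy: "IP (alpha x) (alpha y) = -1" and cyx: "IP (alpha y) (alpha x) = -1" for x y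
  proof -
    have p1: "IP (R x v) (alpha y) = IP v (alpha y) + IP v (alpha x)" using ip_R_alpha[of x v y] cxy by simp
    have p2: "IP (R x v) (alpha x) = - IP v (alpha x)" using ip_R_alpha[of x v x] ip_alpha_self[OF x] by simp
    have p3: "IP (R y (R x v)) (alpha x) = IP v (alpha y)"
      using ip_R_alpha[of y "R x v" x] p1 p2 cyx by simp
    show ?thesis
      unfolding refl_def[of n adj x "R y (R x v)"] p3
      unfolding refl_def[of n adj y "R x v"] p1
      unfolding refl_def[of n adj x v]
      by (rule ext) (simp add: algebra_simps)
  qed
  show ?thesis using F[OF i j c c'] F[OF j i c' c] by (simp add: add.commute)
qed

lemma commute:
  assumes i: "i \<in> {1..n}" and j: "j \<in> {1..n}" and c: "IP (alpha i) (alpha j) = 0"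
  shows "R i (R j v) = R j (R i v)"
proof -
  have c': "IP (alpha j) (alpha i) = 0" using c ipsym by simp
  have p1: "IP (R j v) (alpha i) = IP v (alpha i)" using ip_R_alpha[of j v i] c' by simp
  have p2: "IP (R i v) (alpha j) = IP v (alpha j)" using ip_R_alpha[of i v j] c by simp
  show ?thesis
    unfolding refl_def[of n adj i "R j v"] refl_def[of n adj j "R i v"] p1 p2
    unfolding refl_def[of n adj i v] refl_def[of n adj j v]
    by (rule ext) (simp add: algebra_simps)
qed

lemma cval: "i \<in> {1..n} \<Longrightarrow> j \<in> {1..n} \<Longrightarrow> i \<noteq> j \<Longrightarrow> IP (alpha i) (alpha j) = (if adj i j then -1 else 0)"
  by (simp add: ip_alpha_alpha cartan_def)

lemma adj_neq: "adj i j \<Longrightarrow> i \<noteq> j \<and> i \<in> {1..n} \<and> j \<in> {1..n} \<and> adj j i"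
  using sld unfolding simply_laced_diagram_def by blast

lemma Rp_data:
  assumes t: "t \<in> Pos" and i: "i \<in> {1..n}" and j: "j \<in> {1..n}"
  shows "IP (Rp n adj i t) (alpha j) = RB (IP (alpha i) (alpha j)) (IP t (alpha i)) (IP t (alpha j))"
    "IP (Rp n adj i t) (alpha i) = RA (IP (alpha i) (alpha j)) (IP t (alpha i)) (IP t (alpha j))"
    "H (Rp n adj i t) = RH (IP (alpha i) (alpha j)) (IP t (alpha i)) (IP t (alpha j)) (H t)"
  using Rp_ip[OF t i j] Rp_ip[OF t i i] Rp_ht[OF t i] ip_alpha_self[OF i]
  unfolding RA_def RB_def RH_def by (auto simp: mult.commute)

lemma gamma_facts:
  assumes i: "i \<in> {1..n}" and j: "j \<in> {1..n}" and ij: "i \<noteq> j"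
  shows "R j (alpha i) \<in> Pos" "IP t (R j (alpha i)) = IP t (alpha i) - IP (alpha i) (alpha j) * IP t (alpha j)"
    "H (R j (alpha i)) = 1 - IP (alpha i) (alpha j)"
proof -
  have "alpha i \<noteq> alpha j" using ij unfolding alpha_def by (metis (mono_tags) fun_eq_iff zero_neq_one)
  then show "R j (alpha i) \<in> Pos" using refl_pos[OF alpha_pos[OF i] j] by blast
  show "IP t (R j (alpha i)) = IP t (alpha i) - IP (alpha i) (alpha j) * IP t (alpha j)"
    unfolding refl_def by (simp add: ip_lin2)
  show "H (R j (alpha i)) = 1 - IP (alpha i) (alpha j)"
    using ht_refl[OF j, where v="alpha i" and adj=adj] ht_alpha[OF i] by simp
qed

lemma data_tok:
  assumes B: "B \<in> Orb" and t: "t \<in> B" and i: "i \<in> {1..n}" and j: "j \<in> {1..n}" and ij: "i \<noteq> j"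
  shows "tok (IP (alpha i) (alpha j)) (IP t (alpha i)) (IP t (alpha j)) (H t)"
proof -
  have tP: "t \<in> Pos" using t orb_pos[OF B] by blast
  let ?c = "IP (alpha i) (alpha j)"
  have cji: "IP (alpha j) (alpha i) = ?c" by (rule ipsym)
  have ra: "IP t (alpha i) \<in> {-1,0,1} \<or> t = alpha i" by (rule pos_pair_alpha[OF tP i])
  have rb: "IP t (alpha j) \<in> {-1,0,1} \<or> t = alpha j" by (rule pos_pair_alpha[OF tP j])
  have a2: "IP t (alpha i) = 2 \<longleftrightarrow> t = alpha i" by (rule pos_alpha_iff[OF tP i])
  have b2: "IP t (alpha j) = 2 \<longleftrightarrow> t = alpha j" by (rule pos_alpha_iff[OF tP j])
  have h1: "H t \<ge> 1" by (rule pos_ht[OF tP])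
  have g: "R j (alpha i) \<in> Pos" "IP t (R j (alpha i)) = IP t (alpha i) - ?c * IP t (alpha j)"
    "H (R j (alpha i)) = 1 - ?c" using gamma_facts[OF i j ij] by auto
  have gb: "IP t (R j (alpha i)) \<ge> -2" using ip_bounds(2)[OF pos_root[OF tP] pos_root[OF g(1)]] .
  have gn2: "IP t (R j (alpha i)) \<noteq> -2"
  proof
    assume "IP t (R j (alpha i)) = -2"
    then have "t = (\<lambda>k. - R j (alpha i) k)" using ipm2_eq[OF pos_root[OF tP] pos_root[OF g(1)]] by blast
    then show False using pos_neg_not[OF g(1)] tP by simp
  qed
  have g2: "IP t (R j (alpha i)) = 2 \<Longrightarrow> t = R j (alpha i)"
    using ip2_eq[OF pos_root[OF tP] pos_root[OF g(1)]] by blast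
  show ?thesis unfolding tok_def
    using ra rb a2 b2 h1 g gb gn2 g2 ip_alpha_self[OF i] ip_alpha_self[OF j] cji ht_alpha[OF i] ht_alpha[OF j]
    by auto
qed

lemma data_pairf:
  assumes B: "B \<in> Orb" and s: "s \<in> B" and t: "t \<in> B" and st: "s \<noteq> t"
    and i: "i \<in> {1..n}" and j: "j \<in> {1..n}" and ij: "i \<noteq> j"
  shows "pairf (IP (alpha i) (alpha j)) (IP s (alpha i)) (IP s (alpha j)) (H s) (IP t (alpha i)) (IP t (alpha j)) (H t)"
proof -
  have sP: "s \<in> Pos" using s orb_pos[OF B] by blast
  have tP: "t \<in> Pos" using t orb_pos[OF B] by blast
  let ?c = "IP (alpha i) (alpha j)"
  have o: "IP s t = 0" by (rule orb_orth[OF B s t st])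
  have o': "IP t s = 0" using o ipsym by simp
  have ns: "IP s s = 2" "IP t t = 2" using root_norm pos_root sP tP by auto
  have a2: "IP t (alpha i) = 2 \<longleftrightarrow> t = alpha i" by (rule pos_alpha_iff[OF tP i])
  have b2: "IP t (alpha j) = 2 \<longleftrightarrow> t = alpha j" by (rule pos_alpha_iff[OF tP j])
  have g: "R j (alpha i) \<in> Pos" "IP t (R j (alpha i)) = IP t (alpha i) - ?c * IP t (alpha j)"
    "IP s (R j (alpha i)) = IP s (alpha i) - ?c * IP s (alpha j)" using gamma_facts[OF i j ij] by auto
  have g2: "IP t (R j (alpha i)) = 2 \<Longrightarrow> t = R j (alpha i)"
    using ip2_eq[OF pos_root[OF tP] pos_root[OF g(1)]] by blast
  have P01: "H s - H t - 0 - 1 \<noteq> 0" if "IP s (alpha j) - IP t (alpha j) = 2"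
    using pair_constraint[OF i j, of s t 0 1] ns o that ip_alpha_self[OF j] by simp
  have P10: "H s - H t - 1 - 0 \<noteq> 0" if "IP s (alpha i) - IP t (alpha i) = 2"
    using pair_constraint[OF i j, of s t 1 0] ns o that ip_alpha_self[OF i] by simp
  have P11: "H s - H t - 1 - 1 \<noteq> 0"
    if "(IP s (alpha i) + IP s (alpha j)) - (IP t (alpha i) + IP t (alpha j)) = 3 + ?c"
    using pair_constraint[OF i j, of s t 1 1] ns o that by (simp add: algebra_simps)
  show ?thesis unfolding pairf_def
    using a2 b2 g g2 o P01 P10 P11 by auto
qed

lemma data_rel:
  assumes B: "B \<in> Orb" and s: "s \<in> B" and t: "t \<in> B"
    and i: "i \<in> {1..n}" and j: "j \<in> {1..n}" and ij: "i \<noteq> j"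
  shows "rel (s = t) (IP (alpha i) (alpha j)) (IP s (alpha i)) (IP s (alpha j)) (H s) (IP t (alpha i)) (IP t (alpha j)) (H t)"
  unfolding rel_def using data_pairf[OF B s t _ i j ij] data_pairf[OF B t s _ i j ij] by auto

lemma not_up_min:
  assumes "finite C" "\<not> fixd n adj j C" "\<not> up n adj j C"
  shows "\<exists>d\<in>C. IP d (alpha j) = 1 \<and> (\<forall>b\<in>C. IP b (alpha j) = -1 \<longrightarrow> H d \<le> H b)"
proof -
  define P where "P = {x\<in>C. IP x (alpha j) = 1}"
  have "P \<noteq> {}"
  proof
    assume P0: "P = {}"
    obtain x where x: "x \<in> C" "IP x (alpha j) = 1 \<or> IP x (alpha j) = -1" using assms(2) unfolding fixd_def by blast
    then have "IP x (alpha j) = -1" using P0 unfolding P_def by auto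
    then have "up n adj j C" unfolding up_def using x(1) P0 unfolding P_def by blast
    then show False using assms(3) by simp
  qed
  moreover have "finite P" using assms(1) unfolding P_def by simp
  ultimately obtain d where d: "d \<in> P" "\<forall>b\<in>P. H d \<le> H b" using ex_min_int by blast
  have "\<forall>b\<in>C. IP b (alpha j) = -1 \<longrightarrow> H d \<le> H b"
  proof (intro ballI impI)
    fix b assume b: "b \<in> C" "IP b (alpha j) = -1"
    show "H d \<le> H b"
    proof (rule ccontr)
      assume "\<not> H d \<le> H b"
      then have "\<forall>e\<in>C. IP e (alpha j) = 1 \<longrightarrow> H b < H e" using d unfolding P_def by force
      then have "up n adj j C" unfolding up_def using b by blast
      then show False using assms(3) by simp
    qed
  qed
  then show ?thesis using d(1) unfolding P_def by blast
qed

end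

definition admiss :: "nat \<Rightarrow> (nat \<Rightarrow> nat \<Rightarrow> bool) \<Rightarrow> (nat \<Rightarrow> int) set set \<Rightarrow> bool" where
  "admiss n adj Bs \<longleftrightarrow> (\<forall>B\<in>Bs. \<forall>i\<in>{1..n}. \<forall>j\<in>{1..n}. \<not> adj i j \<longrightarrow>
        (\<forall>\<gamma>. \<gamma> \<in> B \<and> (\<lambda>k. \<gamma> k - alpha i k + alpha j k) \<in> B \<longrightarrow>
             act n adj (refl n adj i) B = act n adj (refl n adj j) B))"


context ORB begin

lemma confA:
  assumes B: "B \<in> Orb" and a: "adj i j" and ui: "up n adj i B" and uj: "up n adj j B"
  shows "fixd n adj j (act n adj (R i) B) \<or> up n adj j (act n adj (R i) B)"
proof (rule ccontr)
  assume neg: "\<not> ?thesis"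
  have ij: "i \<noteq> j" "i \<in> {1..n}" "j \<in> {1..n}" using adj_neq[OF a] by auto
  have c: "IP (alpha i) (alpha j) = -1" using cval[OF ij(2,3,1)] a by simp
  have BP: "B \<subseteq> Pos" by (rule orb_pos[OF B])
  have Ceq: "act n adj (R i) B = Rp n adj i ` B" by (rule act_Rp[OF BP ij(2)])
  have finC: "finite (act n adj (R i) B)" using orb_fin orb_closed[OF B weyl_refl[OF ij(2)]] by blast
  obtain d' where d': "d' \<in> act n adj (R i) B" "IP d' (alpha j) = 1"
    "\<forall>b\<in>act n adj (R i) B. IP b (alpha j) = -1 \<longrightarrow> H d' \<le> H b"
    using not_up_min[OF finC] neg by blast
  obtain d where d: "d \<in> B" "d' = Rp n adj i d" using d'(1) Ceq by blast
  obtain w1 where w1: "w1 \<in> B" "IP w1 (alpha i) = -1" "\<forall>x\<in>B. IP x (alpha i) = 1 \<longrightarrow> H w1 < H x"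
    using ui unfolding up_def by blast
  obtain w2 where w2: "w2 \<in> B" "IP w2 (alpha j) = -1" "\<forall>x\<in>B. IP x (alpha j) = 1 \<longrightarrow> H w2 < H x"
    using uj unfolding up_def by blast
  have dP: "d \<in> Pos" "w1 \<in> Pos" "w2 \<in> Pos" using d(1) w1(1) w2(1) BP by auto
  have m1: "Rp n adj i w1 \<in> act n adj (R i) B" "Rp n adj i w2 \<in> act n adj (R i) B" using Ceq w1(1) w2(1) by auto
  note D = Rp_data[OF dP(1) ij(2,3)] Rp_data[OF dP(2) ij(2,3)] Rp_data[OF dP(3) ij(2,3)]
  show False
  proof (rule adjA)
    show "tok (-1) (IP w1 (alpha i)) (IP w1 (alpha j)) (H w1)" using data_tok[OF B w1(1) ij(2,3,1)] c by simp
    show "tok (-1) (IP w2 (alpha i)) (IP w2 (alpha j)) (H w2)" using data_tok[OF B w2(1) ij(2,3,1)] c by simp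
    show "tok (-1) (IP d (alpha i)) (IP d (alpha j)) (H d)" using data_tok[OF B d(1) ij(2,3,1)] c by simp
    show "rel (w1 = w2) (-1) (IP w1 (alpha i)) (IP w1 (alpha j)) (H w1) (IP w2 (alpha i)) (IP w2 (alpha j)) (H w2)"
      using data_rel[OF B w1(1) w2(1) ij(2,3,1)] c by simp
    show "rel (w1 = d) (-1) (IP w1 (alpha i)) (IP w1 (alpha j)) (H w1) (IP d (alpha i)) (IP d (alpha j)) (H d)"
      using data_rel[OF B w1(1) d(1) ij(2,3,1)] c by simp
    show "rel (w2 = d) (-1) (IP w2 (alpha i)) (IP w2 (alpha j)) (H w2) (IP d (alpha i)) (IP d (alpha j)) (H d)"
      using data_rel[OF B w2(1) d(1) ij(2,3,1)] c by simp
    show "IP w1 (alpha i) = -1" by (rule w1(2))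
    show "IP w2 (alpha i) = 1 \<longrightarrow> H w1 < H w2" using w1(3) w2(1) by blast
    show "IP d (alpha i) = 1 \<longrightarrow> H w1 < H d" using w1(3) d(1) by blast
    show "IP w2 (alpha j) = -1" by (rule w2(2))
    show "IP w1 (alpha j) = 1 \<longrightarrow> H w2 < H w1" using w2(3) w1(1) by blast
    show "IP d (alpha j) = 1 \<longrightarrow> H w2 < H d" using w2(3) d(1) by blast
    show "RB (-1) (IP d (alpha i)) (IP d (alpha j)) = 1" using d'(2) d(2) D c by simp
    show "RB (-1) (IP w1 (alpha i)) (IP w1 (alpha j)) = -1 \<longrightarrow>
          RH (-1) (IP d (alpha i)) (IP d (alpha j)) (H d) \<le> RH (-1) (IP w1 (alpha i)) (IP w1 (alpha j)) (H w1)"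
      using d'(3) m1(1) d(2) D c by auto
    show "RB (-1) (IP w2 (alpha i)) (IP w2 (alpha j)) = -1 \<longrightarrow>
          RH (-1) (IP d (alpha i)) (IP d (alpha j)) (H d) \<le> RH (-1) (IP w2 (alpha i)) (IP w2 (alpha j)) (H w2)"
      using d'(3) m1(2) d(2) D c by auto
  qed
qed


lemma confA2:
  assumes B: "B \<in> Orb" and a: "adj i j" and ui: "up n adj i B" and uj: "up n adj j B"
  shows "fixd n adj i (act n adj (R j) (act n adj (R i) B)) \<or> up n adj i (act n adj (R j) (act n adj (R i) B))"
proof (rule ccontr)
  assume neg: "\<not> ?thesis"
  have ij: "i \<noteq> j" "i \<in> {1..n}" "j \<in> {1..n}" using adj_neq[OF a] by auto
  have c: "IP (alpha i) (alpha j) = -1" using cval[OF ij(2,3,1)] a by simp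
  have c': "IP (alpha j) (alpha i) = -1" using c ipsym by simp
  have BP: "B \<subseteq> Pos" by (rule orb_pos[OF B])
  have CO: "act n adj (R i) B \<in> Orb" by (rule orb_closed[OF B weyl_refl[OF ij(2)]])
  have DO: "act n adj (R j) (act n adj (R i) B) \<in> Orb" by (rule orb_closed[OF CO weyl_refl[OF ij(3)]])
  have Ceq: "act n adj (R i) B = Rp n adj i ` B" by (rule act_Rp[OF BP ij(2)])
  have Deq: "act n adj (R j) (act n adj (R i) B) = Rp n adj j ` Rp n adj i ` B"
    using act_Rp[OF orb_pos[OF CO] ij(3)] Ceq by simp
  have finD: "finite (act n adj (R j) (act n adj (R i) B))" using orb_fin[OF DO] .
  obtain d' where d': "d' \<in> act n adj (R j) (act n adj (R i) B)" "IP d' (alpha i) = 1"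
    "\<forall>b\<in>act n adj (R j) (act n adj (R i) B). IP b (alpha i) = -1 \<longrightarrow> H d' \<le> H b"
    using not_up_min[OF finD] neg by blast
  obtain d where d: "d \<in> B" "d' = Rp n adj j (Rp n adj i d)" using d'(1) Deq by blast
  obtain w1 where w1: "w1 \<in> B" "IP w1 (alpha i) = -1" "\<forall>x\<in>B. IP x (alpha i) = 1 \<longrightarrow> H w1 < H x"
    using ui unfolding up_def by blast
  obtain w2 where w2: "w2 \<in> B" "IP w2 (alpha j) = -1" "\<forall>x\<in>B. IP x (alpha j) = 1 \<longrightarrow> H w2 < H x"
    using uj unfolding up_def by blast
  have dP: "d \<in> Pos" "w1 \<in> Pos" "w2 \<in> Pos" using d(1) w1(1) w2(1) BP by auto
  have dP2: "Rp n adj i d \<in> Pos" "Rp n adj i w1 \<in> Pos" "Rp n adj i w2 \<in> Pos"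
    using Rp_pos[OF _ ij(2)] dP by auto
  have m1: "Rp n adj j (Rp n adj i w1) \<in> act n adj (R j) (act n adj (R i) B)"
    "Rp n adj j (Rp n adj i w2) \<in> act n adj (R j) (act n adj (R i) B)" using Deq w1(1) w2(1) by auto
  note D = Rp_data[OF dP(1) ij(2,3)] Rp_data[OF dP(2) ij(2,3)] Rp_data[OF dP(3) ij(2,3)]
  note E = Rp_data[OF dP2(1) ij(3,2)] Rp_data[OF dP2(2) ij(3,2)] Rp_data[OF dP2(3) ij(3,2)]
  show False
  proof (rule adjA2)
    show "tok (-1) (IP w1 (alpha i)) (IP w1 (alpha j)) (H w1)" using data_tok[OF B w1(1) ij(2,3,1)] c by simp
    show "tok (-1) (IP w2 (alpha i)) (IP w2 (alpha j)) (H w2)" using data_tok[OF B w2(1) ij(2,3,1)] c by simp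
    show "tok (-1) (IP d (alpha i)) (IP d (alpha j)) (H d)" using data_tok[OF B d(1) ij(2,3,1)] c by simp
    show "rel (w1 = w2) (-1) (IP w1 (alpha i)) (IP w1 (alpha j)) (H w1) (IP w2 (alpha i)) (IP w2 (alpha j)) (H w2)"
      using data_rel[OF B w1(1) w2(1) ij(2,3,1)] c by simp
    show "rel (w1 = d) (-1) (IP w1 (alpha i)) (IP w1 (alpha j)) (H w1) (IP d (alpha i)) (IP d (alpha j)) (H d)"
      using data_rel[OF B w1(1) d(1) ij(2,3,1)] c by simp
    show "rel (w2 = d) (-1) (IP w2 (alpha i)) (IP w2 (alpha j)) (H w2) (IP d (alpha i)) (IP d (alpha j)) (H d)"
      using data_rel[OF B w2(1) d(1) ij(2,3,1)] c by simp
    show "IP w1 (alpha i) = -1" by (rule w1(2))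
    show "IP w2 (alpha i) = 1 \<longrightarrow> H w1 < H w2" using w1(3) w2(1) by blast
    show "IP d (alpha i) = 1 \<longrightarrow> H w1 < H d" using w1(3) d(1) by blast
    show "IP w2 (alpha j) = -1" by (rule w2(2))
    show "IP w1 (alpha j) = 1 \<longrightarrow> H w2 < H w1" using w2(3) w1(1) by blast
    show "IP d (alpha j) = 1 \<longrightarrow> H w2 < H d" using w2(3) d(1) by blast
    show "RB (-1) (RB (-1) (IP d (alpha i)) (IP d (alpha j))) (RA (-1) (IP d (alpha i)) (IP d (alpha j))) = 1"
      using d'(2) d(2) D E c c' by simp
    show "RB (-1) (RB (-1) (IP w1 (alpha i)) (IP w1 (alpha j))) (RA (-1) (IP w1 (alpha i)) (IP w1 (alpha j))) = -1 \<longrightarrow>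
      RH (-1) (RB (-1) (IP d (alpha i)) (IP d (alpha j))) (RA (-1) (IP d (alpha i)) (IP d (alpha j))) (RH (-1) (IP d (alpha i)) (IP d (alpha j)) (H d))
      \<le> RH (-1) (RB (-1) (IP w1 (alpha i)) (IP w1 (alpha j))) (RA (-1) (IP w1 (alpha i)) (IP w1 (alpha j))) (RH (-1) (IP w1 (alpha i)) (IP w1 (alpha j)) (H w1))"
      using d'(3) m1(1) d(2) D E c c' by auto
    show "RB (-1) (RB (-1) (IP w2 (alpha i)) (IP w2 (alpha j))) (RA (-1) (IP w2 (alpha i)) (IP w2 (alpha j))) = -1 \<longrightarrow>
      RH (-1) (RB (-1) (IP d (alpha i)) (IP d (alpha j))) (RA (-1) (IP d (alpha i)) (IP d (alpha j))) (RH (-1) (IP d (alpha i)) (IP d (alpha j)) (H d))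
      \<le> RH (-1) (RB (-1) (IP w2 (alpha i)) (IP w2 (alpha j))) (RA (-1) (IP w2 (alpha i)) (IP w2 (alpha j))) (RH (-1) (IP w2 (alpha i)) (IP w2 (alpha j)) (H w2))"
      using d'(3) m1(2) d(2) D E c c' by auto
  qed
qed

lemma compar:
  assumes B: "B \<in> Orb" and j: "j \<in> {1..n}" and ne: "act n adj (R j) B \<noteq> B"
  shows "up n adj j B \<or> up n adj j (act n adj (R j) B)"
proof (rule ccontr)
  assume neg: "\<not> ?thesis"
  have BP: "B \<subseteq> Pos" by (rule orb_pos[OF B])
  have Ceq: "act n adj (R j) B = Rp n adj j ` B" by (rule act_Rp[OF BP j])
  define M where "M = {b\<in>B. IP b (alpha j) = 1 \<or> IP b (alpha j) = -1}"
  have "M \<noteq> {}"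
  proof
    assume "M = {}"
    then have "fixd n adj j B" unfolding fixd_def M_def by auto
    then show False using fixd_eq[OF B j] ne by simp
  qed
  moreover have "finite M" using orb_fin[OF B] unfolding M_def by simp
  ultimately obtain a where a: "a \<in> M" "\<forall>b\<in>M. H a \<le> H b" using ex_min_int by blast
  have "\<exists>d\<in>B. IP d (alpha j) = 1 \<and> H d \<le> H a"
  proof (cases "IP a (alpha j) = 1")
    case True then show ?thesis using a unfolding M_def by auto
  next
    case False
    then have a1: "IP a (alpha j) = -1" "a \<in> B" using a(1) unfolding M_def by auto
    have "\<not> (\<forall>d\<in>B. IP d (alpha j) = 1 \<longrightarrow> H a < H d)" using neg a1 unfolding up_def by blast
    then show ?thesis by force
  qed
  then obtain d where d: "d \<in> B" "IP d (alpha j) = 1" "H d \<le> H a" by blast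
  have dP: "d \<in> Pos" using d(1) BP by blast
  have dne: "IP d (alpha j) \<noteq> 2" using d(2) by simp
  have "up n adj j (Rp n adj j ` B)"
    unfolding up_def
  proof (rule bexI[of _ "Rp n adj j d"])
    show "Rp n adj j d \<in> Rp n adj j ` B" using d(1) by blast
    show "IP (Rp n adj j d) (alpha j) = -1 \<and> (\<forall>e\<in>Rp n adj j ` B. IP e (alpha j) = 1 \<longrightarrow> H (Rp n adj j d) < H e)"
    proof
      show "IP (Rp n adj j d) (alpha j) = -1" using Rp_ip[OF dP j j] d(2) ip_alpha_self[OF j] by simp
      show "\<forall>e\<in>Rp n adj j ` B. IP e (alpha j) = 1 \<longrightarrow> H (Rp n adj j d) < H e"
      proof (intro ballI impI)
        fix e assume e: "e \<in> Rp n adj j ` B" "IP e (alpha j) = 1"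
        then obtain b where b: "b \<in> B" "e = Rp n adj j b" by blast
        have bP: "b \<in> Pos" using b(1) BP by blast
        have "IP b (alpha j) \<noteq> 2"
        proof
          assume "IP b (alpha j) = 2"
          then have "IP e (alpha j) = 2" using Rp_ip[OF bP j j] b(2) by simp
          then show False using e(2) by simp
        qed
        then have pb: "IP b (alpha j) = -1" using Rp_ip[OF bP j j] b(2) e(2) ip_alpha_self[OF j] by simp
        then have "b \<in> M" using b(1) unfolding M_def by simp
        then have "H a \<le> H b" using a(2) by blast
        moreover have "H e = H b + 1" using Rp_ht[OF bP j] b(2) pb by simp
        moreover have "H (Rp n adj j d) = H d - 1" using Rp_ht[OF dP j] d(2) by simp
        ultimately show "H (Rp n adj j d) < H e" using d(3) by linarith
      qed
    qed
  qed
  then show False using neg Ceq by simp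
qed


lemma confN:
  assumes B: "B \<in> Orb" and ij: "i \<in> {1..n}" "j \<in> {1..n}" "i \<noteq> j" and na: "\<not> adj i j"
    and ui: "up n adj i B" and uj: "up n adj j B" and adm: "admiss n adj Orb"
  shows "fixd n adj j (act n adj (R i) B) \<or> up n adj j (act n adj (R i) B) \<or> act n adj (R i) B = act n adj (R j) B"
proof (rule ccontr)
  assume neg: "\<not> ?thesis"
  have c: "IP (alpha i) (alpha j) = 0" using cval[OF ij] na by simp
  have BP: "B \<subseteq> Pos" by (rule orb_pos[OF B])
  have CO: "act n adj (R i) B \<in> Orb" by (rule orb_closed[OF B weyl_refl[OF ij(1)]])
  have Ceq: "act n adj (R i) B = Rp n adj i ` B" by (rule act_Rp[OF BP ij(1)])
  have finC: "finite (act n adj (R i) B)" using orb_fin[OF CO] .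
  obtain d' where d': "d' \<in> act n adj (R i) B" "IP d' (alpha j) = 1"
    "\<forall>b\<in>act n adj (R i) B. IP b (alpha j) = -1 \<longrightarrow> H d' \<le> H b"
    using not_up_min[OF finC] neg by blast
  obtain d where d: "d \<in> B" "d' = Rp n adj i d" using d'(1) Ceq by blast
  obtain w1 where w1: "w1 \<in> B" "IP w1 (alpha i) = -1" "\<forall>x\<in>B. IP x (alpha i) = 1 \<longrightarrow> H w1 < H x"
    using ui unfolding up_def by blast
  obtain w2 where w2: "w2 \<in> B" "IP w2 (alpha j) = -1" "\<forall>x\<in>B. IP x (alpha j) = 1 \<longrightarrow> H w2 < H x"
    using uj unfolding up_def by blast
  have dP: "d \<in> Pos" "w1 \<in> Pos" "w2 \<in> Pos" using d(1) w1(1) w2(1) BP by auto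
  have m1: "Rp n adj i w1 \<in> act n adj (R i) B" "Rp n adj i w2 \<in> act n adj (R i) B" using Ceq w1(1) w2(1) by auto
  note D = Rp_data[OF dP(1) ij(1,2)] Rp_data[OF dP(2) ij(1,2)] Rp_data[OF dP(3) ij(1,2)]
  have cfg: "IP w2 (alpha i) = -1 \<and> IP w2 (alpha j) = -1 \<and> IP d (alpha i) = 1 \<and> IP d (alpha j) = 1 \<and> H d = H w2 + 2 \<and> \<not> (w2 = d)"
  proof (rule nonadj)
    show "tok 0 (IP w1 (alpha i)) (IP w1 (alpha j)) (H w1)" using data_tok[OF B w1(1) ij] c by simp
    show "tok 0 (IP w2 (alpha i)) (IP w2 (alpha j)) (H w2)" using data_tok[OF B w2(1) ij] c by simp
    show "tok 0 (IP d (alpha i)) (IP d (alpha j)) (H d)" using data_tok[OF B d(1) ij] c by simp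
    show "rel (w1 = w2) 0 (IP w1 (alpha i)) (IP w1 (alpha j)) (H w1) (IP w2 (alpha i)) (IP w2 (alpha j)) (H w2)"
      using data_rel[OF B w1(1) w2(1) ij] c by simp
    show "rel (w1 = d) 0 (IP w1 (alpha i)) (IP w1 (alpha j)) (H w1) (IP d (alpha i)) (IP d (alpha j)) (H d)"
      using data_rel[OF B w1(1) d(1) ij] c by simp
    show "rel (w2 = d) 0 (IP w2 (alpha i)) (IP w2 (alpha j)) (H w2) (IP d (alpha i)) (IP d (alpha j)) (H d)"
      using data_rel[OF B w2(1) d(1) ij] c by simp
    show "IP w1 (alpha i) = -1" by (rule w1(2))
    show "IP w2 (alpha i) = 1 \<longrightarrow> H w1 < H w2" using w1(3) w2(1) by blast
    show "IP d (alpha i) = 1 \<longrightarrow> H w1 < H d" using w1(3) d(1) by blast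
    show "IP w2 (alpha j) = -1" by (rule w2(2))
    show "IP w1 (alpha j) = 1 \<longrightarrow> H w2 < H w1" using w2(3) w1(1) by blast
    show "IP d (alpha j) = 1 \<longrightarrow> H w2 < H d" using w2(3) d(1) by blast
    show "RB 0 (IP d (alpha i)) (IP d (alpha j)) = 1" using d'(2) d(2) D c by simp
    show "RB 0 (IP w1 (alpha i)) (IP w1 (alpha j)) = -1 \<longrightarrow>
          RH 0 (IP d (alpha i)) (IP d (alpha j)) (H d) \<le> RH 0 (IP w1 (alpha i)) (IP w1 (alpha j)) (H w1)"
      using d'(3) m1(1) d(2) D c by auto
    show "RB 0 (IP w2 (alpha i)) (IP w2 (alpha j)) = -1 \<longrightarrow>
          RH 0 (IP d (alpha i)) (IP d (alpha j)) (H d) \<le> RH 0 (IP w2 (alpha i)) (IP w2 (alpha j)) (H w2)"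
      using d'(3) m1(2) d(2) D c by auto
  qed
  have o: "IP d w2 = 0" using orb_orth[OF B d(1) w2(1)] cfg by auto
  have nd: "IP d d = 2" "IP w2 w2 = 2" using root_norm pos_root dP by auto
  have "IP (\<lambda>k. d k - w2 k - 1 * alpha i k - 1 * alpha j k) (\<lambda>k. d k - w2 k - 1 * alpha i k - 1 * alpha j k) = 0"
    unfolding pair_formula[OF sld ij(1,2)] using cfg o nd c by simp
  then have z: "\<forall>k\<in>{1..n}. d k - w2 k - 1 * alpha i k - 1 * alpha j k = 0" by (rule ip_eq0[OF sld fin])
  have deq: "d = (\<lambda>k. w2 k + alpha i k + alpha j k)"
  proof (rule supp_eq)
    show "supp n d" by (rule root_supp[OF pos_root[OF dP(1)]])
    show "supp n (\<lambda>k. w2 k + alpha i k + alpha j k)"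
      using root_supp[OF pos_root[OF dP(3)]] supp_alpha[OF ij(1)] supp_alpha[OF ij(2)] unfolding supp_def by simp
    show "\<forall>k\<in>{1..n}. d k = w2 k + alpha i k + alpha j k"
    proof
      fix k assume "k \<in> {1..n}"
      then have "d k - w2 k - 1 * alpha i k - 1 * alpha j k = 0" using z by blast
      then show "d k = w2 k + alpha i k + alpha j k" by simp
    qed
  qed
  have w2ne: "w2 \<noteq> alpha i" using cfg ip_alpha_self[OF ij(1)] by auto
  have dne: "d \<noteq> alpha i" using cfg ip_alpha_self[OF ij(1)] by auto
  have g1: "Rp n adj i w2 = (\<lambda>k. w2 k + alpha i k)" using w2ne cfg unfolding Rp_def refl_def by simp
  have g2: "Rp n adj i d = (\<lambda>k. w2 k + alpha j k)" using dne cfg unfolding Rp_def refl_def by (simp add: deq)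
  have g1C: "(\<lambda>k. w2 k + alpha i k) \<in> act n adj (R i) B" using m1(2) g1 by simp
  have g2C: "(\<lambda>k. w2 k + alpha j k) \<in> act n adj (R i) B" using Ceq d(1) g2 by (metis image_eqI)
  have nji: "\<not> adj j i" using na sld unfolding simply_laced_diagram_def by blast
  have "(\<lambda>k. (\<lambda>k. w2 k + alpha j k) k - alpha j k + alpha i k) \<in> act n adj (R i) B" using g1C by simp
  then have "act n adj (R j) (act n adj (R i) B) = act n adj (R i) (act n adj (R i) B)"
    using adm CO ij nji g2C unfolding admiss_def by blast
  then have "act n adj (R j) (act n adj (R i) B) = B" using orb_R[OF B ij(1)] by simp
  then have "act n adj (R j) B = act n adj (R i) B" using orb_R[OF CO ij(2)] by metis
  then show False using neg by simp
qed

end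

context ORB begin

definition st :: "(nat \<Rightarrow> int) set \<Rightarrow> (nat \<Rightarrow> int) set \<Rightarrow> bool" where
  "st B C \<longleftrightarrow> B \<in> Orb \<and> (\<exists>j\<in>{1..n}. C = act n adj (R j) B \<and> up n adj j B)"

definition nf :: "(nat \<Rightarrow> int) set \<Rightarrow> bool" where
  "nf B \<longleftrightarrow> \<not> (\<exists>C. st B C)"

definition Kc :: nat where "Kc = card Pos + 1"
definition Hm :: int where "Hm = Max (H ` Pos)"
definition pot :: "(nat \<Rightarrow> int) set \<Rightarrow> nat" where
  "pot B = (\<Sum>b\<in>B. Kc ^ nat (Hm - H b))"

lemma st_orb: "st B C \<Longrightarrow> C \<in> Orb"
  unfolding st_def using orb_closed weyl_refl by blast

lemma st_rtr_orb: "st\<^sup>*\<^sup>* B C \<Longrightarrow> B \<in> Orb \<Longrightarrow> C \<in> Orb"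
proof (induction rule: rtranclp_induct)
  case base then show ?case .
next
  case (step y z) show ?case by (rule st_orb[OF step.hyps(2)])
qed

lemma H_le_Hm: "b \<in> Pos \<Longrightarrow> H b \<le> Hm"
  unfolding Hm_def using pos_finite by simp

lemma pot_dec: assumes s: "st B C" shows "pot C < pot B"
proof -
  obtain j where j: "j \<in> {1..n}" "C = act n adj (R j) B" "up n adj j B" and B: "B \<in> Orb"
    using s unfolding st_def by blast
  have CO: "C \<in> Orb" using st_orb[OF s] .
  have BP: "B \<subseteq> Pos" and CP: "C \<subseteq> Pos" using orb_pos B CO by auto
  have finB: "finite B" and finC: "finite C" using orb_fin B CO by auto
  have Ceq: "C = Rp n adj j ` B" using j(2) act_Rp[OF BP j(1)] by simp
  obtain b0 where b0: "b0 \<in> B" "IP b0 (alpha j) = -1" using j(3) unfolding up_def by blast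
  have ne1: "B - C \<noteq> {}" using b0 mem_image_iff[OF B j(1) b0(1)] Ceq by auto
  have ne2: "C - B \<noteq> {}" using b0 Rp_mem_iff[OF B j(1) b0(1)] Ceq by auto
  have "prec n B C" using prec_iff[OF B j(1)] j by simp
  then have "Min (H ` (B - C)) < Min (H ` (C - B))" unfolding prec_def by simp
  then obtain a where a: "a \<in> B - C" "\<forall>c\<in>C - B. H a < H c"
    using min_less_iff[of "B - C" "C - B" H] finB finC ne1 ne2 by auto
  define e where "e b = nat (Hm - H b)" for b
  obtain c0 where c0: "c0 \<in> C - B" using ne2 by blast
  have "H a < H c0" using a(2) c0 by blast
  moreover have "H c0 \<le> Hm" using H_le_Hm c0 CP by blast
  ultimately have ea: "e a \<ge> 1" unfolding e_def by simp
  have ec: "e c \<le> e a - 1" if "c \<in> C - B" for c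
  proof -
    have "H a < H c" using a(2) that by blast
    moreover have "H c \<le> Hm" using H_le_Hm that CP by blast
    ultimately show ?thesis unfolding e_def by simp
  qed
  have K: "Kc \<ge> 1" unfolding Kc_def by simp
  have cardCB: "card (C - B) < Kc"
  proof -
    have "card (C - B) \<le> card Pos" using CP pos_finite by (intro card_mono) auto
    then show ?thesis unfolding Kc_def by simp
  qed
  have "(\<Sum>c\<in>C - B. Kc ^ e c) \<le> (\<Sum>c\<in>C - B. Kc ^ (e a - 1))"
    by (rule sum_mono) (use ec K in \<open>auto intro: power_increasing\<close>)
  also have "\<dots> = card (C - B) * Kc ^ (e a - 1)" by simp
  also have "\<dots> < Kc * Kc ^ (e a - 1)" using cardCB K by simp
  also have "\<dots> = Kc ^ e a" using ea by (metis Suc_diff_le diff_Suc_1 power_Suc)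
  also have "\<dots> \<le> (\<Sum>b\<in>B - C. Kc ^ e b)"
    by (rule member_le_sum) (use a(1) finB in auto)
  finally have lt: "(\<Sum>c\<in>C - B. Kc ^ e c) < (\<Sum>b\<in>B - C. Kc ^ e b)" .
  have pB: "pot B = (\<Sum>b\<in>B \<inter> C. Kc ^ e b) + (\<Sum>b\<in>B - C. Kc ^ e b)"
    unfolding pot_def e_def using finB by (metis Diff_Int_distrib2 Diff_cancel inf_commute sum.Int_Diff)
  have pC: "pot C = (\<Sum>b\<in>B \<inter> C. Kc ^ e b) + (\<Sum>b\<in>C - B. Kc ^ e b)"
    unfolding pot_def e_def using finC by (metis inf_commute sum.Int_Diff)
  show ?thesis using pB pC lt by simp
qed

lemma nf_exists: "B \<in> Orb \<Longrightarrow> \<exists>N. st\<^sup>*\<^sup>* B N \<and> nf N"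
proof (induction B rule: measure_induct_rule[where f=pot])
  case (less B)
  show ?case
  proof (cases "nf B")
    case True then show ?thesis by blast
  next
    case False
    then obtain C where C: "st B C" unfolding nf_def by blast
    obtain N where "st\<^sup>*\<^sup>* C N" "nf N" using less.IH[OF pot_dec[OF C] st_orb[OF C]] by blast
    then show ?thesis using C by (meson converse_rtranclp_into_rtranclp)
  qed
qed

lemma leq_step: assumes "B \<in> Orb" "j \<in> {1..n}" "fixd n adj j B \<or> up n adj j B"
  shows "st\<^sup>*\<^sup>* B (act n adj (R j) B)"
proof (cases "up n adj j B")
  case True
  then have "st B (act n adj (R j) B)" unfolding st_def using assms(1,2) by blast
  then show ?thesis by (rule r_into_rtranclp)
next
  case False
  then have "act n adj (R j) B = B" using fixd_eq[OF assms(1,2)] assms(3) by blast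
  then show ?thesis by simp
qed

lemma act_R3: assumes "B \<in> Orb" "i \<in> {1..n}" "j \<in> {1..n}" "k \<in> {1..n}"
  shows "act n adj (R i) (act n adj (R j) (act n adj (R k) B)) = act n adj (R i \<circ> R j \<circ> R k) B"
proof -
  have "act n adj (R j) (act n adj (R k) B) = act n adj (R j \<circ> R k) B"
    by (rule orb_act_comp[OF assms(1) weyl_refl[OF assms(3)] weyl_refl[OF assms(4)]])
  moreover have "act n adj (R i) (act n adj (R j \<circ> R k) B) = act n adj (R i \<circ> (R j \<circ> R k)) B"
    by (rule orb_act_comp[OF assms(1) weyl_refl[OF assms(2)] weyl_comp[OF weyl_refl[OF assms(3)] weyl_refl[OF assms(4)]]])
  ultimately show ?thesis by (simp add: comp_assoc)
qed

lemma local_conf: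
  assumes adm: "admiss n adj Orb" and s1: "st B C1" and s2: "st B C2"
  shows "\<exists>D. st\<^sup>*\<^sup>* C1 D \<and> st\<^sup>*\<^sup>* C2 D"
proof -
  obtain i where i: "i \<in> {1..n}" "C1 = act n adj (R i) B" "up n adj i B" and B: "B \<in> Orb"
    using s1 unfolding st_def by blast
  obtain j where j: "j \<in> {1..n}" "C2 = act n adj (R j) B" "up n adj j B"
    using s2 unfolding st_def by blast
  have C1O: "C1 \<in> Orb" and C2O: "C2 \<in> Orb" using st_orb s1 s2 by auto
  show ?thesis
  proof (cases "i = j")
    case True then show ?thesis using i j by blast
  next
    case ne: False
    show ?thesis
    proof (cases "adj i j")
      case a: True
      have a': "adj j i" using adj_neq[OF a] by blast
      have c: "IP (alpha i) (alpha j) = -1" using cval[OF i(1) j(1) ne] a by simp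
      define X where "X = act n adj (R j) C1"
      have XO: "X \<in> Orb" unfolding X_def by (rule orb_closed[OF C1O weyl_refl[OF j(1)]])
      have 1: "st\<^sup>*\<^sup>* C1 X" unfolding X_def i(2) by (rule leq_step[OF _ j(1)]) (use i confA[OF B a i(3) j(3)] C1O in auto)
      have 2: "st\<^sup>*\<^sup>* X (act n adj (R i) X)" unfolding X_def i(2)
        by (rule leq_step[OF _ i(1)]) (use confA2[OF B a i(3) j(3)] XO X_def i(2) in auto)
      define Y where "Y = act n adj (R i) C2"
      have YO: "Y \<in> Orb" unfolding Y_def by (rule orb_closed[OF C2O weyl_refl[OF i(1)]])
      have 3: "st\<^sup>*\<^sup>* C2 Y" unfolding Y_def j(2) by (rule leq_step[OF _ i(1)]) (use j confA[OF B a' j(3) i(3)] C2O in auto)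
      have 4: "st\<^sup>*\<^sup>* Y (act n adj (R j) Y)" unfolding Y_def j(2)
        by (rule leq_step[OF _ j(1)]) (use confA2[OF B a' j(3) i(3)] YO Y_def j(2) in auto)
      have "R i \<circ> R j \<circ> R i = R j \<circ> R i \<circ> R j" using braid[OF i(1) j(1) c] by (simp add: fun_eq_iff)
      then have "act n adj (R i) X = act n adj (R j) Y"
        unfolding X_def Y_def i(2) j(2) using act_R3[OF B i(1) j(1) i(1)] act_R3[OF B j(1) i(1) j(1)] by simp
      then show ?thesis using 1 2 3 4 by (metis rtranclp_trans)
    next
      case na: False
      have na': "\<not> adj j i" using na sld unfolding simply_laced_diagram_def by blast
      have c: "IP (alpha i) (alpha j) = 0" using cval[OF i(1) j(1) ne] na by simp
      have h1: "fixd n adj j C1 \<or> up n adj j C1 \<or> C1 = C2"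
        using confN[OF B i(1) j(1) ne na i(3) j(3) adm] i(2) j(2) by simp
      have h2: "fixd n adj i C2 \<or> up n adj i C2 \<or> C2 = C1"
        using confN[OF B j(1) i(1) _ na' j(3) i(3) adm] i(2) j(2) ne by auto
      show ?thesis
      proof (cases "C1 = C2")
        case True then show ?thesis by blast
      next
        case False
        have 1: "st\<^sup>*\<^sup>* C1 (act n adj (R j) C1)" using leq_step[OF C1O j(1)] h1 False by blast
        have 2: "st\<^sup>*\<^sup>* C2 (act n adj (R i) C2)" using leq_step[OF C2O i(1)] h2 False by blast
        have "R j \<circ> R i = R i \<circ> R j" using commute[OF i(1) j(1) c] by (simp add: fun_eq_iff)
        then have "act n adj (R j) C1 = act n adj (R i) C2"
          unfolding i(2) j(2) using orb_RR[OF B j(1) i(1)] orb_RR[OF B i(1) j(1)] by simp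
        then show ?thesis using 1 2 by metis
      qed
    qed
  qed
qed

lemma unf:
  assumes adm: "admiss n adj Orb"
  shows "B \<in> Orb \<Longrightarrow> st\<^sup>*\<^sup>* B N1 \<Longrightarrow> nf N1 \<Longrightarrow> st\<^sup>*\<^sup>* B N2 \<Longrightarrow> nf N2 \<Longrightarrow> N1 = N2"
proof (induction B arbitrary: N1 N2 rule: measure_induct_rule[where f=pot])
  case (less B)
  show ?case
  proof (cases "nf B")
    case True
    have "N1 = B" using less.prems(2) True unfolding nf_def by (metis converse_rtranclpE)
    moreover have "N2 = B" using less.prems(4) True unfolding nf_def by (metis converse_rtranclpE)
    ultimately show ?thesis by simp
  next
    case False
    obtain B1' where b1: "st B B1'" "st\<^sup>*\<^sup>* B1' N1"
      using less.prems(2,3) False unfolding nf_def by (metis converse_rtranclpE)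
    obtain B2' where b2: "st B B2'" "st\<^sup>*\<^sup>* B2' N2"
      using less.prems(4,5) False unfolding nf_def by (metis converse_rtranclpE)
    obtain D where D: "st\<^sup>*\<^sup>* B1' D" "st\<^sup>*\<^sup>* B2' D" using local_conf[OF adm b1(1) b2(1)] by blast
    have DO: "D \<in> Orb" using st_rtr_orb[OF D(1) st_orb[OF b1(1)]] .
    obtain N3 where N3: "st\<^sup>*\<^sup>* D N3" "nf N3" using nf_exists[OF DO] by blast
    have "N1 = N3" using less.IH[OF pot_dec[OF b1(1)] st_orb[OF b1(1)] b1(2) less.prems(3)] D(1) N3
      by (meson rtranclp_trans)
    moreover have "N2 = N3" using less.IH[OF pot_dec[OF b2(1)] st_orb[OF b2(1)] b2(2) less.prems(5)] D(2) N3
      by (meson rtranclp_trans)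
    ultimately show ?thesis by simp
  qed
qed

lemma act_id: "B \<subseteq> Pos \<Longrightarrow> act n adj id B = B"
proof (rule set_eqI)
  fix x assume BP: "B \<subseteq> Pos"
  show "x \<in> act n adj id B \<longleftrightarrow> x \<in> B"
  proof
    assume "x \<in> act n adj id B"
    then have "x \<in> Pos \<and> (\<exists>b\<in>B. x = id b \<or> x = (\<lambda>k. - id b k))" by (rule act_mem[THEN iffD1])
    then obtain b where b: "x \<in> Pos" "b \<in> B" "x = b \<or> x = (\<lambda>k. - b k)" by auto
    have "x \<noteq> (\<lambda>k. - b k)" using pos_neg_not[of b] b BP by auto
    then show "x \<in> B" using b by auto
  next
    assume "x \<in> B" then show "x \<in> act n adj id B" using BP by (intro act_mem[THEN iffD2]) auto
  qed
qed

lemma reach_top: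
  assumes adm: "admiss n adj Orb" and B0: "B0 \<in> Orb" and nf0: "nf B0" and v: "v \<in> W"
  shows "st\<^sup>*\<^sup>* (act n adj v B0) B0"
  using v
proof (induction rule: weyl.induct)
  case weyl_id then show ?case using act_id[OF orb_pos[OF B0]] by (simp add: id_def)
next
  case (weyl_step w i)
  define X where "X = act n adj w B0"
  have XO: "X \<in> Orb" unfolding X_def by (rule orb_closed[OF B0 weyl_step.hyps(1)])
  have Yeq: "act n adj (R i \<circ> w) B0 = act n adj (R i) X"
    unfolding X_def using orb_act_comp[OF B0 weyl_refl[OF weyl_step.hyps(2)] weyl_step.hyps(1)] by simp
  have IH: "st\<^sup>*\<^sup>* X B0" using weyl_step.IH unfolding X_def .
  show ?case unfolding Yeq
  proof (cases "act n adj (R i) X = X")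
    case True then show "st\<^sup>*\<^sup>* (act n adj (R i) X) B0" using IH by simp
  next
    case False
    from compar[OF XO weyl_step.hyps(2) False]
    show "st\<^sup>*\<^sup>* (act n adj (R i) X) B0"
    proof
      assume "up n adj i X"
      then have sXY: "st X (act n adj (R i) X)" unfolding st_def using XO weyl_step.hyps(2) by blast
      obtain N where N: "st\<^sup>*\<^sup>* (act n adj (R i) X) N" "nf N" using nf_exists[OF st_orb[OF sXY]] by blast
      have "N = B0" using unf[OF adm XO _ N(2) IH nf0] sXY N(1) by (meson converse_rtranclp_into_rtranclp)
      then show ?thesis using N(1) by simp
    next
      assume "up n adj i (act n adj (R i) X)"
      moreover have "act n adj (R i) X \<in> Orb" by (rule orb_closed[OF XO weyl_refl[OF weyl_step.hyps(2)]])
      ultimately have "st (act n adj (R i) X) X" unfolding st_def using orb_R[OF XO weyl_step.hyps(2)] weyl_step.hyps(2) by metis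
      then show ?thesis using IH by (meson converse_rtranclp_into_rtranclp)
    qed
  qed
qed

lemma reach_all:
  assumes adm: "admiss n adj Orb" and B0: "B0 \<in> Orb" and nf0: "nf B0" and B: "B \<in> Orb"
  shows "st\<^sup>*\<^sup>* B B0"
proof -
  obtain w where w: "w \<in> W" "B = act n adj w B1" using B by blast
  obtain w0 where w0: "w0 \<in> W" "B0 = act n adj w0 B1" using B0 by blast
  obtain w0' where w0': "w0' \<in> W" "w0' \<circ> w0 = id" using weyl_inv[OF w0(1)] by blast
  have e0: "act n adj (w \<circ> w0') B0 = act n adj ((w \<circ> w0') \<circ> w0) B1"
    using w0(2) act_comp[OF weyl_comp[OF w(1) w0'(1)] w0(1)] by simp
  have e1: "(w \<circ> w0') \<circ> w0 = w" using w0'(2) by (simp add: comp_assoc)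
  have "act n adj (w \<circ> w0') B0 = B" using e0 unfolding e1 w(2) .
  then show ?thesis using reach_top[OF adm B0 nf0 weyl_comp[OF w(1) w0'(1)]] by simp
qed

end

context ORB begin

lemma st_mless: assumes "st B C" shows "mless n adj Orb B C"
proof -
  obtain j where j: "j \<in> {1..n}" "C = act n adj (R j) B" "up n adj j B" and B: "B \<in> Orb"
    using assms unfolding st_def by blast
  have "prec n B C" using prec_iff[OF B j(1)] j by simp
  then have "mstep n adj Orb B C" unfolding mstep_def using B j by blast
  then show ?thesis unfolding mless_def by (rule tranclp.r_into_trancl)
qed

lemma chain_Cons0: "chain n adj (j # is) B0 0 = act n adj (R j) (chain n adj is B0 0)"
  unfolding chain_def by simp

lemma chain_ConsS: "chain n adj (j # is) B0 (Suc k) = chain n adj is B0 k"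
  unfolding chain_def by simp

lemma chain_list:
  assumes "st\<^sup>*\<^sup>* B B0"
  shows "\<exists>xs. set xs \<subseteq> {1..n} \<and>
           (\<forall>k < length xs. mless n adj Orb (chain n adj xs B0 k) (chain n adj xs B0 (Suc k))) \<and>
           chain n adj xs B0 0 = B"
  using assms
proof (induction rule: converse_rtranclp_induct)
  case base
  show ?case by (rule exI[of _ "[]"]) (simp add: chain_def)
next
  case (step B C)
  obtain xs where hx: "set xs \<subseteq> {1..n}"
    "\<forall>k < length xs. mless n adj Orb (chain n adj xs B0 k) (chain n adj xs B0 (Suc k))"
    "chain n adj xs B0 0 = C" using step.IH by blast
  obtain j where j: "j \<in> {1..n}" "C = act n adj (R j) B" "up n adj j B" and B: "B \<in> Orb"
    using step.hyps(1) unfolding st_def by blast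
  have c0: "chain n adj (j # xs) B0 0 = B" unfolding chain_Cons0 hx(3) j(2) by (rule orb_R[OF B j(1)])
  have m: "mless n adj Orb B C" by (rule st_mless[OF step.hyps(1)])
  have "\<forall>k < length (j # xs). mless n adj Orb (chain n adj (j # xs) B0 k) (chain n adj (j # xs) B0 (Suc k))"
  proof (intro allI impI)
    fix k assume k: "k < length (j # xs)"
    show "mless n adj Orb (chain n adj (j # xs) B0 k) (chain n adj (j # xs) B0 (Suc k))"
    proof (cases k)
      case 0 then show ?thesis using c0 m hx(3) by (simp add: chain_ConsS)
    next
      case (Suc k') then show ?thesis using hx(2) k by (simp add: chain_ConsS)
    qed
  qed
  then show ?case using hx(1) j(1) c0 by (intro exI[of _ "j # xs"]) simp
qed

end

theorem lemma3p5:
  fixes n :: nat and adj :: "nat \<Rightarrow> nat \<Rightarrow> bool"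
    and \<B> :: "(nat \<Rightarrow> int) set set" and B0 B :: "(nat \<Rightarrow> int) set"
  assumes "simply_laced_diagram n adj"
    and "spherical n adj"
    and "admissible n adj \<B>"
    and "B0 \<in> \<B>"
    and "\<not> (\<exists>C\<in>\<B>. mless n adj \<B> B0 C)"
    and "B \<in> \<B>"
  shows "\<exists>is. set is \<subseteq> {1..n} \<and>
           (\<forall>k < length is. mless n adj \<B> (chain n adj is B0 k) (chain n adj is B0 (Suc k))) \<and>
           chain n adj is B0 0 = B"
proof -
  obtain B1 where B1: "orth_pos_set n adj B1" and Beq: "\<B> = {act n adj w B1 | w. w \<in> weyl n adj}"
    using assms(3) unfolding admissible_def is_orbit_def by blast
  have fin: "finite (weyl n adj)" using assms(2) unfolding spherical_def .
  interpret O: ORB n adj B1 using assms(1) fin B1 by unfold_locales auto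
  have adm: "admiss n adj \<B>" using assms(3) unfolding admissible_def admiss_def by blast
  have nf0: "O.nf B0"
    unfolding O.nf_def
  proof
    assume "\<exists>C. O.st B0 C"
    then obtain C where C: "O.st B0 C" by blast
    have "C \<in> \<B>" using O.st_orb[OF C] Beq by simp
    moreover have "mless n adj \<B> B0 C" using O.st_mless[OF C] Beq by simp
    ultimately show False using assms(5) by blast
  qed
  have "O.st\<^sup>*\<^sup>* B B0"
    using O.reach_all[OF adm[unfolded Beq] assms(4)[unfolded Beq] nf0 assms(6)[unfolded Beq]] .
  from O.chain_list[OF this] show ?thesis using Beq by simp
qed

end
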